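(* Let $M \in \mathbb N$, $\mathcal A \subset \{0,\dots,M-1\}$, $\chi \in C_c^\infty((0,1);[0,1])$, and let $N = KM$ with $K \in \mathbb N$. Let $\varphi, \psi : [0,1] \to [0,1]$ satisfy $$d\big(\operatorname{supp}\psi, \Phi^{-1}(\operatorname{supp}\varphi)\big) \ge r$$ for some $r$ with $0 < Mr \le 2 d(\operatorname{supp}\chi, 0)$. Then $$\|\varphi_N B_N \psi_N\|_{\ell^2_N \to \ell^2_N} \le \tilde g_\chi(Nr), \qquad \|\psi_N^{\mathcal F} B_N \varphi_N^{\mathcal F}\|_{\ell^2_N \to \ell^2_N} \le \tilde g_\chi(Nr),$$ where $\tilde g_\chi:(0,\infty)\to[0,\infty)$ is a function satisfying: for every $n$ there is $C_n>0$ with $\tilde g_\chi(x) \le C_n x^{-n}$, and if $\chi \in \mathcal G^s_c((0,1))$ for some $s > 1$ then $\tilde g_\chi(x) \le C e^{-c x^{1/s}}$ for some $C, c > 0$; the constants $C_n, C, c$ depend only on $\chi$.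
   Context: For $N \in \mathbb N$, $\mathbb Z_N \simeq \{0,\dots,N-1\}$, $\ell^2_N = \ell^2(\mathbb Z_N)$, and $\mathcal F_N u(j) = N^{-1/2}\sum_{\ell=0}^{N-1} e^{-2\pi i j\ell/N} u(\ell)$. For a function $\varphi$ on $[0,1]$, $\varphi_N(j) = \varphi(j/N)$, viewed as a multiplication operator on $\ell^2_N$, and $\varphi_N^{\mathcal F} = \mathcal F_N^* \varphi_N \mathcal F_N$. For $N = KM$ and $a \in \{0,\dots,M-1\}$, $\Pi_a:\ell^2_N\to\ell^2_K$, $\Pi_a u(j) = u(j+aK)$, and the quantum open baker's map is $B_N = \sum_{a \in \mathcal A} \mathcal F_N^*\Pi_a^* \chi_K \mathcal F_K \chi_K \Pi_a$ with $\chi_K$ multiplication by $j\mapsto\chi(j/K)$. Distances on $[0,1]$ are taken with $0$ and $1$ identified: $d(x,y) = \min\{|x-y|,1-|x-y|\}$, $d(U,V) = \inf_{x\in U, y \in V} d(x,y)$. The expanding map $\Phi : \bigsqcup_{a\in\mathcal A}(a/M,(a+1)/M) \to (0,1)$ is $\Phi(x) = Mx - a$ for $x \in (a/M,(a+1)/M)$, and $\Phi^{-1}(S)$ denotes preimage. $\mathcal G^s_c((0,1))$ ($s>1$) is the set of $f\in C_c^\infty(\mathbb R)$, $\operatorname{supp} f\subset(0,1)$, such that for every compact $K'$ there is $C_{K',f}$ with $\sup_{K'}|\partial^\alpha f| \le C_{K',f}^{\alpha+1}(\alpha!)^s$ for all $\alpha \ge 0$. *)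

theory Defs
  imports "HOL-Analysis.Analysis"
begin

text \<open>Vectors in l2(Z_N) are represented as functions nat => complex, only the
values at indices 0..N-1 being relevant; operators are maps on such functions.\<close>

definition l2norm :: "nat \<Rightarrow> (nat \<Rightarrow> complex) \<Rightarrow> real" where
  "l2norm N u = sqrt (\<Sum>j<N. (cmod (u j))\<^sup>2)"

definition opnorm :: "nat \<Rightarrow> ((nat \<Rightarrow> complex) \<Rightarrow> (nat \<Rightarrow> complex)) \<Rightarrow> real" where
  "opnorm N T = Sup ((\<lambda>u. l2norm N (T u)) ` {u. l2norm N u \<le> 1})"

definition DFT :: "nat \<Rightarrow> (nat \<Rightarrow> complex) \<Rightarrow> (nat \<Rightarrow> complex)" where
  "DFT N u = (\<lambda>j. (1 / sqrt (real N)) *\<^sub>R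
      (\<Sum>l<N. exp (- 2 * pi * \<i> * of_nat j * of_nat l / of_nat N) * u l))"

definition DFT_adj :: "nat \<Rightarrow> (nat \<Rightarrow> complex) \<Rightarrow> (nat \<Rightarrow> complex)" where
  "DFT_adj N u = (\<lambda>j. (1 / sqrt (real N)) *\<^sub>R
      (\<Sum>l<N. exp (2 * pi * \<i> * of_nat j * of_nat l / of_nat N) * u l))"

definition mult_op :: "nat \<Rightarrow> (real \<Rightarrow> real) \<Rightarrow> (nat \<Rightarrow> complex) \<Rightarrow> (nat \<Rightarrow> complex)" where
  "mult_op N \<phi> u = (\<lambda>j. complex_of_real (\<phi> (real j / real N)) * u j)"

definition fourier_mult_op :: "nat \<Rightarrow> (real \<Rightarrow> real) \<Rightarrow> (nat \<Rightarrow> complex) \<Rightarrow> (nat \<Rightarrow> complex)" where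
  "fourier_mult_op N \<phi> = DFT_adj N \<circ> mult_op N \<phi> \<circ> DFT N"

definition Pi_op :: "nat \<Rightarrow> nat \<Rightarrow> (nat \<Rightarrow> complex) \<Rightarrow> (nat \<Rightarrow> complex)" where
  "Pi_op K a u = (\<lambda>j. u (j + a * K))"

definition Pi_adj :: "nat \<Rightarrow> nat \<Rightarrow> (nat \<Rightarrow> complex) \<Rightarrow> (nat \<Rightarrow> complex)" where
  "Pi_adj K a v = (\<lambda>j. if a * K \<le> j \<and> j < (a + 1) * K then v (j - a * K) else 0)"

definition baker :: "nat \<Rightarrow> nat \<Rightarrow> nat set \<Rightarrow> (real \<Rightarrow> real) \<Rightarrow> (nat \<Rightarrow> complex) \<Rightarrow> (nat \<Rightarrow> complex)" where
  "baker M K A chi u = (\<lambda>j. \<Sum>a\<in>A.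
      DFT_adj (K * M) (Pi_adj K a (mult_op K chi (DFT K (mult_op K chi (Pi_op K a u))))) j)"

text \<open>Distance on [0,1] with 0 and 1 identified, and distance between sets
(infimum, with inf of the empty set = +infinity).\<close>
definition circ_dist :: "real \<Rightarrow> real \<Rightarrow> real" where
  "circ_dist x y = min \<bar>x - y\<bar> (1 - \<bar>x - y\<bar>)"

definition circ_setdist :: "real set \<Rightarrow> real set \<Rightarrow> ereal" where
  "circ_setdist U V = (INF x\<in>U. INF y\<in>V. ereal (circ_dist x y))"

definition supp01 :: "(real \<Rightarrow> real) \<Rightarrow> real set" where
  "supp01 f = closure {x \<in> {0..1}. f x \<noteq> 0}"

definition supp :: "(real \<Rightarrow> real) \<Rightarrow> real set" where
  "supp f = closure {x. f x \<noteq> 0}"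

definition Phi_preimage :: "nat \<Rightarrow> nat set \<Rightarrow> real set \<Rightarrow> real set" where
  "Phi_preimage M A S = {x. \<exists>a\<in>A. real a / real M < x \<and> x < (real a + 1) / real M
                              \<and> real M * x - real a \<in> S}"

definition smooth :: "(real \<Rightarrow> real) \<Rightarrow> bool" where
  "smooth f \<longleftrightarrow> (\<forall>k x. ((deriv ^^ k) f) differentiable (at x))"

definition cutoff :: "(real \<Rightarrow> real) \<Rightarrow> bool" where
  "cutoff chi \<longleftrightarrow> smooth chi \<and> compact (supp chi) \<and> supp chi \<subseteq> {0<..<1}
                 \<and> (\<forall>x. 0 \<le> chi x \<and> chi x \<le> 1)"

definition gevrey_c :: "real \<Rightarrow> (real \<Rightarrow> real) \<Rightarrow> bool" where
  "gevrey_c s f \<longleftrightarrow> smooth f \<and> compact (supp f) \<and> supp f \<subseteq> {0<..<1} \<and>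
     (\<forall>K'. compact K' \<longrightarrow> (\<exists>C. \<forall>\<alpha>::nat. \<forall>x\<in>K'.
         \<bar>(deriv ^^ \<alpha>) f x\<bar> \<le> C ^ (\<alpha> + 1) * (fact \<alpha>) powr s))"

end

theory Submission
  imports Defs
begin


definition ee :: "real \<Rightarrow> complex" where
  "ee t = exp (2 * pi * \<i> * complex_of_real t)"

lemma ee_add: "ee (a + b) = ee a * ee b"
  by (simp add: ee_def distrib_left exp_add)

lemma ee_mult_nat: "ee (real n * t) = ee t ^ n"
  unfolding ee_def by (metis exp_of_nat_mult mult.left_commute of_real_mult of_real_of_nat_eq)

lemma ee_int: "ee (real_of_int k) = 1"
proof -
  have "ee (real_of_int k) = exp (\<i> * (complex_of_int k * (complex_of_real pi * 2)))"
    unfolding ee_def by (simp add: algebra_simps)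
  also have "\<dots> = 1" by (rule exp_2pi_1_int)
  finally show ?thesis .
qed

lemma ee_nat: "ee (real k) = 1"
  using ee_int[of "int k"] by simp

lemma ee_eq_1_iff: "ee t = 1 \<longleftrightarrow> t \<in> \<int>"
proof
  assume "ee t = 1"
  then obtain n :: int where "2 * pi * t = real_of_int (2 * n) * pi"
    unfolding ee_def exp_eq_1 by auto
  then have "t = of_int n" by simp
  then show "t \<in> \<int>" by simp
next
  assume "t \<in> \<int>" then show "ee t = 1" by (metis Ints_cases ee_int)
qed

lemma norm_ee [simp]: "cmod (ee t) = 1"
proof -
  have "2 * pi * \<i> * complex_of_real t = \<i> * complex_of_real (2 * pi * t)" by simp
  then show ?thesis unfolding ee_def by (simp only: norm_exp_i_times)
qed

lemma cnj_ee: "cnj (ee t) = ee (- t)"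
  unfolding ee_def by (simp add: exp_cnj)

lemma ee_minus: "ee (- t) = inverse (ee t)"
  unfolding ee_def by (simp add: exp_minus)

lemma geom_ee:
  fixes N :: nat and d :: int
  assumes "N \<ge> 1" "\<bar>d\<bar> < int N"
  shows "(\<Sum>j<N. ee (real j * real_of_int d / real N)) = (if d = 0 then of_nat N else 0)"
proof (cases "d = 0")
  case True then show ?thesis by (simp add: ee_def)
next
  case False
  let ?w = "ee (real_of_int d / real N)"
  have eq: "ee (real j * real_of_int d / real N) = ?w ^ j" for j
    using ee_mult_nat[of j "real_of_int d / real N"] by simp
  have "?w \<noteq> 1"
  proof
    assume "?w = 1"
    then have "real_of_int d / real N \<in> \<int>" by (simp add: ee_eq_1_iff)
    then obtain k :: int where k: "real_of_int d / real N = of_int k" by (auto elim: Ints_cases)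
    then have "real_of_int d = of_int k * real N" using assms by (simp add: field_simps)
    then have "d = k * int N" by (metis of_int_eq_iff of_int_mult of_int_of_nat_eq)
    with False have "k \<noteq> 0" by auto
    then have "\<bar>k\<bar> * int N \<ge> 1 * int N" by (intro mult_right_mono) auto
    moreover have "\<bar>d\<bar> = \<bar>k\<bar> * int N" using \<open>d = k * int N\<close> by (simp add: abs_mult)
    ultimately show False using assms by linarith
  qed
  moreover have "?w ^ N = 1"
    using ee_mult_nat[of N "real_of_int d / real N"] assms ee_int[of d] by simp
  ultimately show ?thesis using False by (simp add: eq sum_gp_strict)
qed

lemma orth_ee:
  assumes "N \<ge> 1" "l < N" "l' < N"
  shows "(\<Sum>j<N. ee (real j * (real l - real l') / real N)) = (if l = l' then of_nat N else 0)"
proof -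
  have "\<bar>int l - int l'\<bar> < int N" using assms by auto
  from geom_ee[OF assms(1) this] show ?thesis by simp
qed

lemma cmod_sq: "complex_of_real ((cmod z)\<^sup>2) = z * cnj z"
  by (metis complex_norm_square of_real_power)

lemma parseval_ee:
  fixes c :: "nat \<Rightarrow> complex"
  assumes "N \<ge> 1"
  shows "(\<Sum>j<N. (cmod (\<Sum>l<N. ee (real j * real l / real N) * c l))\<^sup>2) = real N * (\<Sum>l<N. (cmod (c l))\<^sup>2)"
proof -
  have "complex_of_real (\<Sum>j<N. (cmod (\<Sum>l<N. ee (real j * real l / real N) * c l))\<^sup>2)
      = (\<Sum>j<N. (\<Sum>l<N. ee (real j * real l / real N) * c l) * cnj (\<Sum>l'<N. ee (real j * real l' / real N) * c l'))"
    by (simp only: of_real_sum cmod_sq)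
  also have "\<dots> = (\<Sum>j<N. \<Sum>l<N. \<Sum>l'<N. ee (real j * (real l - real l') / real N) * (c l * cnj (c l')))"
  proof (rule sum.cong[OF refl])
    fix j
    have e: "ee (real j * real l / real N) * cnj (ee (real j * real l' / real N)) = ee (real j * (real l - real l') / real N)" for l l'
      by (simp add: cnj_ee ee_add[symmetric] right_diff_distrib diff_divide_distrib)
    show "(\<Sum>l<N. ee (real j * real l / real N) * c l) * cnj (\<Sum>l'<N. ee (real j * real l' / real N) * c l') =
          (\<Sum>l<N. \<Sum>l'<N. ee (real j * (real l - real l') / real N) * (c l * cnj (c l')))"
      unfolding cnj_sum sum_product
      by (intro sum.cong refl) (subst e[symmetric], simp add: ac_simps)
  qed
  also have "\<dots> = (\<Sum>l<N. \<Sum>l'<N. \<Sum>j<N. ee (real j * (real l - real l') / real N) * (c l * cnj (c l')))"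
    by (subst sum.swap) (rule sum.cong[OF refl], rule sum.swap)
  also have "\<dots> = (\<Sum>l<N. \<Sum>l'<N. (\<Sum>j<N. ee (real j * (real l - real l') / real N)) * (c l * cnj (c l')))"
    by (simp only: sum_distrib_right)
  also have "\<dots> = (\<Sum>l<N. \<Sum>l'<N. (if l = l' then of_nat N * (c l * cnj (c l')) else 0))"
    using assms by (intro sum.cong refl) (simp add: orth_ee)
  also have "\<dots> = (\<Sum>l<N. of_nat N * (c l * cnj (c l)))"
    by (intro sum.cong refl) (simp add: sum.delta)
  also have "\<dots> = complex_of_real (real N * (\<Sum>l<N. (cmod (c l))\<^sup>2))"
    by (simp only: of_real_mult of_real_sum of_real_of_nat_eq cmod_sq sum_distrib_left)
  finally show ?thesis by (simp only: of_real_eq_iff)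
qed


lemma DFT_ee: "DFT N u j = complex_of_real (1 / sqrt (real N)) * (\<Sum>l<N. ee (- (real j * real l / real N)) * u l)"
  unfolding DFT_def ee_def scaleR_conv_of_real
  by (intro arg_cong2[where f="(*)"] refl sum.cong) (simp_all add: field_simps)

lemma DFT_adj_ee: "DFT_adj N u j = complex_of_real (1 / sqrt (real N)) * (\<Sum>l<N. ee (real j * real l / real N) * u l)"
  unfolding DFT_adj_def ee_def scaleR_conv_of_real
  by (intro arg_cong2[where f="(*)"] refl sum.cong) (simp_all add: field_simps)

lemma l2norm_cong: "(\<And>j. j < N \<Longrightarrow> u j = v j) \<Longrightarrow> l2norm N u = l2norm N v"
  unfolding l2norm_def by (intro arg_cong[where f=sqrt] sum.cong) auto

lemma sumsq_DFT_adj: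
  assumes "N \<ge> 1"
  shows "(\<Sum>j<N. (cmod (DFT_adj N u j))\<^sup>2) = (\<Sum>j<N. (cmod (u j))\<^sup>2)"
proof -
  have "(\<Sum>j<N. (cmod (DFT_adj N u j))\<^sup>2) = (\<Sum>j<N. (1 / real N) * (cmod (\<Sum>l<N. ee (real j * real l / real N) * u l))\<^sup>2)"
    using assms by (intro sum.cong refl) (simp add: DFT_adj_ee norm_divide power_divide)
  also have "\<dots> = (1 / real N) * (real N * (\<Sum>l<N. (cmod (u l))\<^sup>2))"
    by (simp only: sum_distrib_left[symmetric] parseval_ee[OF assms])
  finally show ?thesis using assms by simp
qed

lemma sumsq_DFT:
  assumes "N \<ge> 1"
  shows "(\<Sum>j<N. (cmod (DFT N u j))\<^sup>2) = (\<Sum>j<N. (cmod (u j))\<^sup>2)"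
proof -
  have e: "cmod (\<Sum>l<N. ee (- (real j * real l / real N)) * u l) = cmod (\<Sum>l<N. ee (real j * real l / real N) * cnj (u l))" for j
  proof -
    have "(\<Sum>l<N. ee (- (real j * real l / real N)) * u l) = cnj (\<Sum>l<N. ee (real j * real l / real N) * cnj (u l))"
      by (simp add: cnj_ee)
    then show ?thesis by (metis complex_mod_cnj)
  qed
  have "(\<Sum>j<N. (cmod (DFT N u j))\<^sup>2) = (\<Sum>j<N. (1 / real N) * (cmod (\<Sum>l<N. ee (real j * real l / real N) * cnj (u l)))\<^sup>2)"
    using assms by (intro sum.cong refl) (simp add: DFT_ee norm_divide power_divide e)
  also have "\<dots> = (1 / real N) * (real N * (\<Sum>l<N. (cmod (cnj (u l)))\<^sup>2))"
    by (simp only: sum_distrib_left[symmetric] parseval_ee[OF assms])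
  finally show ?thesis using assms by simp
qed

lemma l2norm_DFT: "N \<ge> 1 \<Longrightarrow> l2norm N (DFT N u) = l2norm N u"
  unfolding l2norm_def by (simp add: sumsq_DFT)

lemma l2norm_DFT_adj: "N \<ge> 1 \<Longrightarrow> l2norm N (DFT_adj N u) = l2norm N u"
  unfolding l2norm_def by (simp add: sumsq_DFT_adj)

lemma DFT_DFT_adj:
  assumes "N \<ge> 1" "j < N"
  shows "DFT N (DFT_adj N v) j = v j"
proof -
  have "DFT N (DFT_adj N v) j = complex_of_real (1 / real N) *
        (\<Sum>l<N. \<Sum>m<N. ee (real l * (real m - real j) / real N) * v m)"
  proof -
    have e: "ee (- (real j * real l / real N)) * ee (real l * real m / real N) = ee (real l * (real m - real j) / real N)" for l m
      by (simp add: ee_add[symmetric] algebra_simps diff_divide_distrib)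
    have "DFT N (DFT_adj N v) j = complex_of_real (1 / sqrt (real N)) * complex_of_real (1 / sqrt (real N)) *
        (\<Sum>l<N. \<Sum>m<N. ee (- (real j * real l / real N)) * (ee (real l * real m / real N) * v m))"
      by (simp add: DFT_ee DFT_adj_ee sum_distrib_left mult_ac)
    also have "complex_of_real (1 / sqrt (real N)) * complex_of_real (1 / sqrt (real N)) = complex_of_real (1 / real N)"
      using assms by (simp flip: of_real_mult)
    finally show ?thesis by (simp add: mult.assoc[symmetric] e)
  qed
  also have "\<dots> = complex_of_real (1 / real N) * (\<Sum>m<N. (\<Sum>l<N. ee (real l * (real m - real j) / real N)) * v m)"
    by (subst sum.swap) (simp only: sum_distrib_right)
  also have "\<dots> = complex_of_real (1 / real N) * (\<Sum>m<N. (if m = j then of_nat N * v m else 0))"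
    using assms by (intro arg_cong2[where f="(*)"] refl sum.cong) (simp_all add: orth_ee)
  also have "\<dots> = v j" using assms by (simp add: sum.delta)
  finally show ?thesis .
qed

lemma opnorm_le:
  assumes "Q \<ge> 0" "\<And>u. (\<Sum>j<N. (cmod (T u j))\<^sup>2) \<le> Q\<^sup>2 * (\<Sum>j<N. (cmod (u j))\<^sup>2)"
  shows "opnorm N T \<le> Q"
  unfolding opnorm_def
proof (rule cSup_least)
  show "(\<lambda>u. l2norm N (T u)) ` {u. l2norm N u \<le> 1} \<noteq> {}"
  proof -
    have "(\<lambda>_. 0) \<in> {u. l2norm N u \<le> 1}" by (simp add: l2norm_def)
    then show ?thesis by blast
  qed
next
  fix x assume "x \<in> (\<lambda>u. l2norm N (T u)) ` {u. l2norm N u \<le> 1}"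
  then obtain u where u: "l2norm N u \<le> 1" "x = l2norm N (T u)" by auto
  have "x = sqrt (\<Sum>j<N. (cmod (T u j))\<^sup>2)" using u by (simp add: l2norm_def)
  also have "\<dots> \<le> sqrt (Q\<^sup>2 * (\<Sum>j<N. (cmod (u j))\<^sup>2))" using assms(2) by simp
  also have "\<dots> = Q * l2norm N u" using assms(1) by (simp add: l2norm_def real_sqrt_mult)
  also have "\<dots> \<le> Q" using u assms(1) by (simp add: mult_left_le)
  finally show "x \<le> Q" .
qed

lemma sum_blocks:
  fixes f :: "nat \<Rightarrow> 'a::comm_monoid_add"
  shows "(\<Sum>i<K * M. f i) = (\<Sum>a<M. \<Sum>j<K. f (j + a * K))"
proof -
  have "(\<Sum>i<M * K. f i) = (\<Sum>a<M. sum f {a * K..<a * K + K})"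
    by (rule sum.nat_group[symmetric])
  also have "\<dots> = (\<Sum>a<M. \<Sum>j<K. f (j + a * K))"
  proof (rule sum.cong[OF refl])
    fix a
    have "sum f {0 + a * K..<K + a * K} = (\<Sum>j = 0..<K. f (j + a * K))"
      by (rule sum.shift_bounds_nat_ivl)
    then show "sum f {a * K..<a * K + K} = (\<Sum>j<K. f (j + a * K))"
      by (simp add: add.commute atLeast0LessThan)
  qed
  finally show ?thesis by (simp add: mult.commute)
qed

lemma sum_mod_split:
  fixes f :: "nat \<Rightarrow> 'a::comm_monoid_add"
  shows "(\<Sum>n<K * M. f n) = (\<Sum>s<M. \<Sum>n'<K. f (M * n' + s))"
proof -
  have "(\<Sum>n<M * K. f n) = (\<Sum>n'<K. \<Sum>s<M. f (s + n' * M))" by (rule sum_blocks)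
  also have "\<dots> = (\<Sum>s<M. \<Sum>n'<K. f (M * n' + s))"
    by (subst sum.swap) (simp add: add.commute mult.commute)
  finally show ?thesis by (simp add: mult.commute)
qed


definition nabla :: "real \<Rightarrow> (real \<Rightarrow> real) \<Rightarrow> real \<Rightarrow> real" where
  "nabla h G = (\<lambda>x. G x - G (x - h))"

definition Dd :: "(nat \<Rightarrow> complex) \<Rightarrow> nat \<Rightarrow> complex" where
  "Dd f = (\<lambda>m. f m - (if m = 0 then 0 else f (m - 1)))"

lemma sbp_step:
  fixes z :: complex
  assumes "\<forall>m\<ge>L. g m = 0"
  shows "(1 - z) * (\<Sum>m<L. g m * z ^ m) = (\<Sum>m<Suc L. Dd g m * z ^ m)"
proof -
  have a: "(\<Sum>m<Suc L. g m * z ^ m) = (\<Sum>m<L. g m * z ^ m)" using assms by simp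
  have b: "(\<Sum>m<Suc L. (if m = 0 then 0 else g (m - 1)) * z ^ m) = z * (\<Sum>m<L. g m * z ^ m)"
    by (subst sum.lessThan_Suc_shift) (simp add: sum_distrib_left mult_ac)
  have "(\<Sum>m<Suc L. Dd g m * z ^ m) = (\<Sum>m<Suc L. g m * z ^ m) - (\<Sum>m<Suc L. (if m = 0 then 0 else g (m - 1)) * z ^ m)"
    unfolding Dd_def by (simp add: left_diff_distrib sum_subtractf)
  also have "\<dots> = (1 - z) * (\<Sum>m<L. g m * z ^ m)" by (simp only: a b) (simp add: left_diff_distrib)
  finally show ?thesis ..
qed

lemma Dd_vanish: "\<forall>m\<ge>L. g m = 0 \<Longrightarrow> \<forall>m\<ge>Suc L. Dd g m = 0"
  unfolding Dd_def by auto

lemma sbp: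
  fixes z :: complex
  assumes "\<forall>m\<ge>K. f m = 0"
  shows "(1 - z) ^ p * (\<Sum>m<K. f m * z ^ m) = (\<Sum>m<K + p. (Dd ^^ p) f m * z ^ m) \<and> (\<forall>m\<ge>K + p. (Dd ^^ p) f m = 0)"
proof (induction p)
  case 0 then show ?case using assms by simp
next
  case (Suc p)
  then have v: "\<forall>m\<ge>K + p. (Dd ^^ p) f m = 0" and e: "(1 - z) ^ p * (\<Sum>m<K. f m * z ^ m) = (\<Sum>m<K + p. (Dd ^^ p) f m * z ^ m)" by auto
  have "(1 - z) ^ Suc p * (\<Sum>m<K. f m * z ^ m) = (1 - z) * (\<Sum>m<K + p. (Dd ^^ p) f m * z ^ m)"
    by (simp add: e[symmetric] mult.assoc)
  also have "\<dots> = (\<Sum>m<Suc (K + p). Dd ((Dd ^^ p) f) m * z ^ m)" by (rule sbp_step[OF v])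
  finally show ?case using Dd_vanish[OF v] by simp
qed

lemma Dd_nabla:
  assumes "h > 0" "\<And>x. x < 0 \<Longrightarrow> G x = 0"
  shows "(Dd ^^ p) (\<lambda>m. complex_of_real (G (real m * h))) m = complex_of_real ((nabla h ^^ p) G (real m * h))
         \<and> (\<forall>x<0. (nabla h ^^ p) G x = 0)"
proof (induction p arbitrary: m)
  case 0 then show ?case using assms by simp
next
  case (Suc p)
  have v: "\<forall>x<0. (nabla h ^^ p) G x = 0" using Suc by blast
  have e: "(Dd ^^ p) (\<lambda>m. complex_of_real (G (real m * h))) k = complex_of_real ((nabla h ^^ p) G (real k * h))" for k
    using Suc by blast
  have 1: "(Dd ^^ Suc p) (\<lambda>m. complex_of_real (G (real m * h))) m = complex_of_real ((nabla h ^^ Suc p) G (real m * h))"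
  proof (cases "m = 0")
    case True
    then show ?thesis using v assms(1) by (simp add: Dd_def nabla_def e)
  next
    case False
    then have "real (m - 1) * h = real m * h - h" by (simp add: of_nat_diff algebra_simps)
    then show ?thesis using False by (simp add: Dd_def nabla_def e)
  qed
  have 2: "\<forall>x<0. (nabla h ^^ Suc p) G x = 0" using v assms(1) by (simp add: nabla_def)
  show ?case using 1 2 by blast
qed

definition smooth_all :: "(real \<Rightarrow> real) \<Rightarrow> bool" where
  "smooth_all G \<longleftrightarrow> (\<forall>k x. (deriv ^^ k) G differentiable (at x))"

lemma deriv_shift_diff:
  assumes "\<And>x. F differentiable (at x)"
  shows "deriv (nabla h F) = nabla h (deriv F)"
    and "\<And>x. nabla h F differentiable (at x)"
proof -
  have d: "DERIV F x :> deriv F x" for x using assms DERIV_deriv_iff_real_differentiable by blast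
  have d2: "DERIV (\<lambda>x. F (x + (- h))) x :> deriv F (x - h)" for x
    using d[of "x - h"] DERIV_shift[of F "deriv F (x - h)" x "- h"] by simp
  have dd: "DERIV (nabla h F) x :> deriv F x - deriv F (x - h)" for x
    unfolding nabla_def using DERIV_diff[OF d d2[of x]] by simp
  show "deriv (nabla h F) = nabla h (deriv F)"
  proof (rule ext)
    fix x
    have "deriv (nabla h F) x = deriv F x - deriv F (x - h)" by (rule DERIV_imp_deriv[OF dd])
    then show "deriv (nabla h F) x = nabla h (deriv F) x" by (simp add: nabla_def)
  qed
  show "nabla h F differentiable (at x)" for x
    using dd real_differentiable_def by blast
qed

lemma deriv_nabla:
  assumes "smooth_all G"
  shows "(deriv ^^ k) (nabla h G) = nabla h ((deriv ^^ k) G)"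
proof (induction k)
  case 0 then show ?case by simp
next
  case (Suc k)
  have "\<And>x. (deriv ^^ k) G differentiable (at x)" using assms unfolding smooth_all_def by blast
  then show ?case using Suc by (simp add: deriv_shift_diff(1))
qed

lemma smooth_nabla: "smooth_all G \<Longrightarrow> smooth_all (nabla h G)"
  unfolding smooth_all_def
  by (metis deriv_nabla deriv_shift_diff(2) smooth_all_def)

lemma mvt_bound:
  fixes F :: "real \<Rightarrow> real"
  assumes "\<And>x. F differentiable (at x)" "\<And>x. \<bar>deriv F x\<bar> \<le> B" "h \<ge> 0"
  shows "\<bar>F x - F (x - h)\<bar> \<le> h * B"
proof (cases "h = 0")
  case True then show ?thesis by simp
next
  case False
  then have "x - h < x" using assms(3) by simp
  moreover have "\<And>y. DERIV F y :> deriv F y" using assms(1) DERIV_deriv_iff_real_differentiable by blast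
  ultimately obtain z where "F x - F (x - h) = (x - (x - h)) * deriv F z"
    using MVT2[of "x - h" x F "deriv F"] by blast
  then have "\<bar>F x - F (x - h)\<bar> = h * \<bar>deriv F z\<bar>" using assms(3) by (simp add: abs_mult)
  also have "\<dots> \<le> h * B" using assms(2,3) by (simp add: mult_left_mono)
  finally show ?thesis .
qed

lemma nabla_bound:
  assumes "smooth_all G" "\<And>x. \<bar>(deriv ^^ p) G x\<bar> \<le> B" "h \<ge> 0"
  shows "\<bar>(nabla h ^^ p) G x\<bar> \<le> h ^ p * B"
  using assms(1,2)
proof (induction p arbitrary: G B x)
  case 0 then show ?case by simp
next
  case (Suc p)
  have sm: "smooth_all (nabla h G)" using smooth_nabla[OF Suc.prems(1)] .
  have dif: "\<And>x. (deriv ^^ p) G differentiable (at x)" using Suc.prems(1) unfolding smooth_all_def by blast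
  have bd: "\<bar>(deriv ^^ p) (nabla h G) y\<bar> \<le> h * B" for y
  proof -
    have "(deriv ^^ p) (nabla h G) y = (deriv ^^ p) G y - (deriv ^^ p) G (y - h)"
      using deriv_nabla[OF Suc.prems(1), of p h] by (simp add: nabla_def)
    also have "\<bar>\<dots>\<bar> \<le> h * B"
      by (rule mvt_bound[OF dif _ assms(3)]) (use Suc.prems(2) in simp)
    finally show ?thesis .
  qed
  have "\<bar>(nabla h ^^ p) (nabla h G) x\<bar> \<le> h ^ p * (h * B)" by (rule Suc.IH[OF sm bd])
  then show ?case by (simp add: funpow_Suc_right mult_ac del: funpow.simps)
qed


lemma cutoff_zero:
  assumes "cutoff chi" "chi x \<noteq> 0" shows "0 < x \<and> x < 1"
proof -
  have "x \<in> supp chi" unfolding supp_def using assms(2) by (intro subsetD[OF closure_subset]) simp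
  then show ?thesis using assms(1) unfolding cutoff_def by auto
qed

lemma cutoff_smooth: "cutoff chi \<Longrightarrow> smooth_all chi"
  unfolding cutoff_def smooth_all_def smooth_def by (elim conjE) assumption

lemma loc_zero:
  assumes "open U" "\<And>y. y \<in> U \<Longrightarrow> F y = 0" "y \<in> U"
  shows "(deriv ^^ p) F y = (0::real)"
  using assms(3)
proof (induction p arbitrary: y)
  case 0 then show ?case using assms(2) by simp
next
  case (Suc p)
  have "((\<lambda>_. 0::real) has_field_derivative 0) (at y)" by simp
  then have "((deriv ^^ p) F has_field_derivative 0) (at y)"
    by (rule has_field_derivative_transform_within_open[OF _ assms(1) Suc.prems]) (use Suc.IH in simp)
  then show ?case by (simp add: DERIV_imp_deriv)
qed

lemma cutoff_deriv_zero:
  assumes "cutoff chi" "x \<notin> supp chi"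
  shows "(deriv ^^ p) chi x = 0"
proof (rule loc_zero[of "- supp chi"])
  show "open (- supp chi)" unfolding supp_def by auto
  show "x \<in> - supp chi" using assms by auto
  fix y assume y: "y \<in> - supp chi"
  show "chi y = 0"
  proof (rule ccontr)
    assume "chi y \<noteq> 0"
    then have "y \<in> supp chi" unfolding supp_def by (intro subsetD[OF closure_subset]) simp
    with \<open>y \<in> - supp chi\<close> show False by simp
  qed
qed

definition Bd :: "(real \<Rightarrow> real) \<Rightarrow> nat \<Rightarrow> real" where
  "Bd chi p = Sup ((\<lambda>x. \<bar>(deriv ^^ p) chi x\<bar>) ` {0..1})"

lemma Bd_bdd:
  assumes "cutoff chi"
  shows "bdd_above ((\<lambda>x. \<bar>(deriv ^^ p) chi x\<bar>) ` {0..1})"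
proof -
  have "continuous_on {0..1} ((deriv ^^ p) chi)"
    using cutoff_smooth[OF assms] unfolding smooth_all_def
    by (intro differentiable_imp_continuous_on) (auto simp: differentiable_on_def intro: differentiable_at_withinI)
  then have "compact ((deriv ^^ p) chi ` {0..1})" by (rule compact_continuous_image) simp
  then have "bounded ((deriv ^^ p) chi ` {0..1})" by (rule compact_imp_bounded)
  then obtain B where "\<forall>y\<in>(deriv ^^ p) chi ` {0..1}. norm y \<le> B" by (auto simp: bounded_iff)
  then show ?thesis by (intro bdd_aboveI[of _ B]) auto
qed

lemma Bd_bound:
  assumes "cutoff chi"
  shows "\<bar>(deriv ^^ p) chi x\<bar> \<le> Bd chi p"
proof (cases "x \<in> {0..1}")
  case True
  then show ?thesis unfolding Bd_def by (intro cSup_upper Bd_bdd[OF assms]) auto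
next
  case False
  then have "x \<notin> supp chi" using assms unfolding cutoff_def by auto
  then have "(deriv ^^ p) chi x = 0" by (rule cutoff_deriv_zero[OF assms])
  moreover have "\<bar>(deriv ^^ p) chi 0\<bar> \<le> Bd chi p"
    unfolding Bd_def by (intro cSup_upper Bd_bdd[OF assms]) auto
  ultimately show ?thesis by simp
qed

lemma Bd_nonneg: "cutoff chi \<Longrightarrow> 0 \<le> Bd chi p"
  using Bd_bound[of chi p 0] by linarith

definition Sk :: "(real \<Rightarrow> real) \<Rightarrow> nat \<Rightarrow> real \<Rightarrow> complex" where
  "Sk chi K t = (\<Sum>j<K. complex_of_real (chi (real j / real K)) * ee (real j * t))"

lemma S_bound:
  assumes "cutoff chi" "K \<ge> 1"
  shows "cmod (1 - ee t) ^ p * cmod (Sk chi K t) \<le> real (K + p) * (1 / real K) ^ p * Bd chi p"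
proof -
  define f where "f m = complex_of_real (chi (real m * (1 / real K)))" for m
  have fz: "\<forall>m\<ge>K. f m = 0"
  proof (intro allI impI)
    fix m assume "K \<le> m"
    then have "real m * (1 / real K) \<ge> 1" using assms(2) by (simp add: field_simps)
    then show "f m = 0" unfolding f_def using cutoff_zero[OF assms(1)] by fastforce
  qed
  have S: "Sk chi K t = (\<Sum>m<K. f m * ee t ^ m)"
    unfolding Sk_def f_def by (simp add: ee_mult_nat)
  have h: "(1 / real K) > 0" using assms(2) by simp
  have G0: "\<And>x. x < 0 \<Longrightarrow> chi x = 0" using cutoff_zero[OF assms(1)] by fastforce
  have "cmod (1 - ee t) ^ p * cmod (Sk chi K t) = cmod ((1 - ee t) ^ p * (\<Sum>m<K. f m * ee t ^ m))"
    by (simp add: S norm_mult norm_power)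
  also have "\<dots> = cmod (\<Sum>m<K + p. (Dd ^^ p) f m * ee t ^ m)"
    using sbp[OF fz, of "ee t" p] by simp
  also have "\<dots> \<le> (\<Sum>m<K + p. cmod ((Dd ^^ p) f m * ee t ^ m))" by (rule norm_sum)
  also have "\<dots> \<le> (\<Sum>m<K + p. (1 / real K) ^ p * Bd chi p)"
  proof (rule sum_mono)
    fix m
    have "(Dd ^^ p) f m = complex_of_real ((nabla (1 / real K) ^^ p) chi (real m * (1 / real K)))"
      unfolding f_def using Dd_nabla[where G=chi and h="1/real K", OF h G0] by blast
    moreover have "\<bar>(nabla (1 / real K) ^^ p) chi (real m * (1 / real K))\<bar> \<le> (1 / real K) ^ p * Bd chi p"
      by (rule nabla_bound[OF cutoff_smooth[OF assms(1)] Bd_bound[OF assms(1)]]) (use h in simp)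
    ultimately show "cmod ((Dd ^^ p) f m * ee t ^ m) \<le> (1 / real K) ^ p * Bd chi p"
      by (simp add: norm_mult norm_power)
  qed
  also have "\<dots> = real (K + p) * (1 / real K) ^ p * Bd chi p" by simp
  finally show ?thesis .
qed

lemma sin_lower:
  fixes x :: real
  assumes "0 \<le> x" "x \<le> 8 / 5"
  shows "x / 2 \<le> sin x"
proof -
  have "\<bar>sin x - (\<Sum>m<3. sin_coeff m * x ^ m)\<bar> \<le> inverse (fact 3) * \<bar>x\<bar> ^ 3"
    by (rule Maclaurin_sin_bound)
  moreover have "(\<Sum>m<3. sin_coeff m * x ^ m) = x"
    by (simp add: numeral_3_eq_3 sin_coeff_def)
  ultimately have "\<bar>sin x - x\<bar> \<le> x ^ 3 / 6" using assms by (simp add: fact_numeral)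
  then have "sin x \<ge> x - x ^ 3 / 6" using abs_le_D2[of "sin x - x" "x^3/6"] by linarith
  moreover have "x ^ 3 \<le> 3 * x"
  proof -
    have "x * x \<le> (8/5) * (8/5)" using assms by (intro mult_mono) auto
    then have "x * x \<le> 3" by simp
    then have "x * x * x \<le> 3 * x" using assms by (simp add: mult_right_mono)
    then show ?thesis by (simp add: power3_eq_cube)
  qed
  ultimately show ?thesis by linarith
qed

lemma sin_circ:
  assumes "\<bar>v\<bar> \<le> 1"
  shows "min \<bar>v\<bar> (1 - \<bar>v\<bar>) \<le> \<bar>sin (pi * v)\<bar>"
proof -
  define w where "w = \<bar>v\<bar>"
  define m where "m = min w (1 - w)"
  have w: "0 \<le> w" "w \<le> 1" using assms by (auto simp: w_def)
  have sw: "\<bar>sin (pi * v)\<bar> = \<bar>sin (pi * w)\<bar>"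
    unfolding w_def by (cases "v \<ge> 0") (auto simp: abs_if)
  have sm: "sin (pi * w) = sin (pi * m)"
  proof (cases "w \<le> 1 - w")
    case True then show ?thesis by (simp add: m_def)
  next
    case False
    then have "m = 1 - w" by (simp add: m_def)
    then have "pi * m = pi - pi * w" by (simp add: right_diff_distrib)
    then show ?thesis by (simp add: sin_pi_minus)
  qed
  have m: "0 \<le> m" "m \<le> 1 / 2" using w by (auto simp: m_def min_def)
  have "pi * m \<le> pi * (1 / 2)" using m by (intro mult_left_mono) auto
  moreover have "pi \<le> 16 / 5" using pi_approx(2) by simp
  ultimately have "pi * m \<le> 8 / 5" by linarith
  then have "pi * m / 2 \<le> sin (pi * m)" using m by (intro sin_lower) auto
  moreover have "2 * m \<le> pi * m" using m pi_ge_two by (intro mult_right_mono) auto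
  then have "m \<le> pi * m / 2" by linarith
  ultimately have "m \<le> sin (pi * m)" by linarith
  then have "m \<le> \<bar>sin (pi * m)\<bar>" by (meson abs_ge_self order_trans)
  then show ?thesis using sw sm unfolding m_def w_def by simp
qed

lemma ee_circ:
  assumes "y \<in> {0..1}" "u \<in> {0..1}"
  shows "2 * circ_dist y u \<le> cmod (1 - ee (y - u))"
proof -
  have "cmod (1 - ee (y - u)) = cmod (exp (\<i> * complex_of_real (2 * pi * (y - u))) - 1)"
    unfolding ee_def by (simp add: norm_minus_commute mult_ac)
  also have "\<dots> = 2 * \<bar>sin (2 * pi * (y - u) / 2)\<bar>" by (rule dist_exp_i_1)
  also have "2 * pi * (y - u) / 2 = pi * (y - u)" by simp
  finally have e: "cmod (1 - ee (y - u)) = 2 * \<bar>sin (pi * (y - u))\<bar>" .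
  have "\<bar>y - u\<bar> \<le> 1" using assms by auto
  from sin_circ[OF this] show ?thesis unfolding e circ_dist_def by simp
qed


lemma setdist_le:
  assumes "x \<in> U" "y \<in> V"
  shows "circ_setdist U V \<le> ereal (circ_dist x y)"
  unfolding circ_setdist_def
  by (rule INF_lower2[OF assms(1)], rule INF_lower[OF assms(2)])

lemma sep:
  fixes M K :: nat and r :: real
  assumes K: "K \<ge> 1" and M: "M \<ge> 1" and r: "r > 0" and ch: "cutoff chi"
    and hchi: "ereal (real M * r) \<le> 2 * circ_setdist (supp chi) {0}"
    and hsep: "circ_setdist (supp01 \<psi>) (Phi_preimage M A (supp01 \<phi>)) \<ge> ereal r"
    and n: "n < K * M" and phin: "\<phi> (real n / real (K * M)) \<noteq> 0"
    and m: "m < K" and chim: "chi (real m / real K) \<noteq> 0"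
    and a: "a \<in> A" "a < M" and psim: "\<psi> (real (m + a * K) / real (K * M)) \<noteq> 0"
  shows "real M * r / 2 \<le> circ_dist (real n / real (K * M)) (real m / real K)"
proof -
  define u where "u = real m / real K"
  define y where "y = real n / real (K * M)"
  have u01: "0 < u" "u < 1" using cutoff_zero[OF ch chim] by (auto simp: u_def)
  have usupp: "u \<in> supp chi" unfolding supp_def u_def using chim by (intro subsetD[OF closure_subset]) simp
  have "circ_setdist (supp chi) {0} \<le> ereal (circ_dist u 0)" by (rule setdist_le[OF usupp]) simp
  then have "2 * circ_setdist (supp chi) {0} \<le> 2 * ereal (circ_dist u 0)"
    by (rule ereal_mult_left_mono) simp
  then have "2 * circ_setdist (supp chi) {0} \<le> ereal (2 * circ_dist u 0)" by simp
  from order_trans[OF hchi this] have "ereal (real M * r) \<le> ereal (2 * circ_dist u 0)" .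
  then have hd: "real M * r \<le> 2 * min u (1 - u)" using u01 by (simp add: circ_dist_def)
  have nK: "real n < real (K * M)" using n by (simp only: of_nat_less_iff)
  have y01: "0 \<le> y" "y < 1" using nK by (auto simp: y_def)
  have Mpos: "real M > 0" using M by simp
  have Kpos: "real K > 0" using K by simp
  show ?thesis
  proof (cases "y = 0")
    case True
    then show ?thesis using hd u01 unfolding y_def[symmetric] u_def[symmetric] circ_dist_def by (auto simp: min_def)
  next
    case False
    then have ypos: "y > 0" using y01 by simp
    define x' where "x' = (y + real a) / real M"
    define x where "x = real (m + a * K) / real (K * M)"
    have xx: "x = (u + real a) / real M" using Kpos Mpos by (simp add: x_def u_def field_simps)
    have "y \<in> supp01 \<phi>" unfolding supp01_def y_def
      using phin y01 by (intro subsetD[OF closure_subset]) (simp add: y_def)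
    moreover have "real a / real M < x'" "x' < (real a + 1) / real M"
      using ypos y01 Mpos by (auto simp: x'_def field_simps)
    moreover have "real M * x' - real a = y" using Mpos by (simp add: x'_def field_simps)
    ultimately have "x' \<in> Phi_preimage M A (supp01 \<phi>)" unfolding Phi_preimage_def using a by auto
    moreover have "x \<in> supp01 \<psi>"
    proof -
      have lt: "real (m + a * K) < real (K * M)"
      proof -
        have "m + a * K < K + a * K" using m by simp
        also have "\<dots> = (a + 1) * K" by simp
        also have "\<dots> \<le> M * K" using a by (intro mult_right_mono) auto
        finally have "m + a * K < K * M" by (simp add: mult.commute)
        then show ?thesis by (simp only: of_nat_less_iff)
      qed
      then have "0 \<le> x" "x \<le> 1" using Kpos Mpos unfolding x_def by (simp_all add: divide_le_eq_1)
      moreover note lt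
      ultimately show ?thesis unfolding supp01_def x_def using psim
        by (intro subsetD[OF closure_subset]) simp
    qed
    ultimately have "circ_setdist (supp01 \<psi>) (Phi_preimage M A (supp01 \<phi>)) \<le> ereal (circ_dist x x')"
      by (intro setdist_le)
    from order_trans[OF hsep this] have "r \<le> circ_dist x x'" by simp
    moreover have "x - x' = (u - y) / real M" using Mpos by (simp add: xx x'_def field_simps)
    ultimately have "r \<le> \<bar>u - y\<bar> / real M" unfolding circ_dist_def by (simp add: abs_divide)
    then have "real M * r \<le> \<bar>u - y\<bar>" using Mpos by (simp add: field_simps)
    moreover have "min u (1 - u) \<le> 1 - \<bar>y - u\<bar>" using u01 y01 by (auto simp: abs_if min_def)
    moreover have "0 < real M * r" using r Mpos by simp
    ultimately show ?thesis using hd unfolding y_def[symmetric] u_def[symmetric] circ_dist_def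
      by (auto simp: abs_minus_commute)
  qed
qed


definition Hp :: "real \<Rightarrow> nat \<Rightarrow> real \<Rightarrow> real" where
  "Hp R p x = (if R \<le> x then 1 / x ^ p else 0)"

lemma tel:
  assumes "R > 0" "\<theta> \<ge> 0"
  shows "(\<Sum>k<K. (if R \<le> real k + \<theta> then 1 / (real k + \<theta>) - 1 / (real k + \<theta> + 1) else 0))
         \<le> 1 / R - 1 / max R (real K + \<theta>)"
proof (induction K)
  case 0
  have "1 / max R \<theta> \<le> 1 / R" using assms by (intro divide_left_mono) auto
  then show ?case by simp
next
  case (Suc K)
  show ?case
  proof (cases "R \<le> real K + \<theta>")
    case True
    then have "max R (real K + \<theta>) = real K + \<theta>" "max R (real (Suc K) + \<theta>) = real K + \<theta> + 1" by auto
    then show ?thesis using Suc True by (simp add: add_ac)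
  next
    case False
    then have "max R (real K + \<theta>) = R" by simp
    moreover have "1 / max R (real (Suc K) + \<theta>) \<le> 1 / R" using assms by (intro divide_left_mono) auto
    ultimately show ?thesis using Suc False by simp
  qed
qed

lemma Hp_term:
  assumes "R > 0" "p \<ge> 2"
  shows "Hp R p x \<le> (1 + R) / R ^ (p - 1) * (if R \<le> x then 1 / x - 1 / (x + 1) else 0)"
proof (cases "R \<le> x")
  case False then show ?thesis by (simp add: Hp_def)
next
  case True
  then have x: "x > 0" using assms by simp
  obtain q where q: "p = q + 2" using assms(2) by (metis add.commute le_Suc_ex)
  have Rq: "R ^ q \<le> x ^ q" using True assms by (intro power_mono) auto
  have a: "R * (x * (x + 1)) \<le> (1 + R) * (x * x)"
  proof -
    have "R * x \<le> x * x" using True x by (intro mult_right_mono) auto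
    then show ?thesis by (simp add: algebra_simps)
  qed
  have "R ^ (q + 1) * (x * (x + 1)) = R ^ q * (R * (x * (x + 1)))" by simp
  also have "\<dots> \<le> x ^ q * ((1 + R) * (x * x))"
    by (rule mult_mono[OF Rq a]) (use assms x in auto)
  also have "\<dots> = (1 + R) * x ^ p" by (simp add: q power_add power2_eq_square mult_ac)
  finally have ineq: "R ^ (q + 1) * (x * (x + 1)) \<le> (1 + R) * x ^ p" .
  have "1 / x - 1 / (x + 1) = 1 / (x * (x + 1))" using x by (simp add: field_simps)
  moreover have "1 / x ^ p \<le> (1 + R) / R ^ (q + 1) * (1 / (x * (x + 1)))"
  proof -
    have "1 / x ^ p = (1 + R) / ((1 + R) * x ^ p)" using assms by simp
    also have "\<dots> \<le> (1 + R) / (R ^ (q + 1) * (x * (x + 1)))"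
      by (rule frac_le) (use ineq x assms in auto)
    also have "\<dots> = (1 + R) / R ^ (q + 1) * (1 / (x * (x + 1)))" by simp
    finally show ?thesis .
  qed
  ultimately show ?thesis using True q by (simp add: Hp_def)
qed

lemma lattice1:
  assumes "R > 0" "p \<ge> 2" "\<theta> \<ge> 0"
  shows "(\<Sum>k<K. Hp R p (real k + \<theta>)) \<le> (1 + R) / R ^ p"
proof -
  have c: "(1 + R) / R ^ (p - 1) \<ge> 0" using assms by simp
  have "(\<Sum>k<K. Hp R p (real k + \<theta>)) \<le> (\<Sum>k<K. (1 + R) / R ^ (p - 1) * (if R \<le> real k + \<theta> then 1 / (real k + \<theta>) - 1 / (real k + \<theta> + 1) else 0))"
    using Hp_term[OF assms(1,2)] by (intro sum_mono) (simp add: add.assoc)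
  also have "\<dots> = (1 + R) / R ^ (p - 1) * (\<Sum>k<K. (if R \<le> real k + \<theta> then 1 / (real k + \<theta>) - 1 / (real k + \<theta> + 1) else 0))"
    by (simp add: sum_distrib_left)
  also have "\<dots> \<le> (1 + R) / R ^ (p - 1) * (1 / R)"
  proof (rule mult_left_mono[OF _ c])
    have "1 / max R (real K + \<theta>) \<ge> 0" using assms by simp
    then show "(\<Sum>k<K. (if R \<le> real k + \<theta> then 1 / (real k + \<theta>) - 1 / (real k + \<theta> + 1) else 0)) \<le> 1 / R"
      using tel[OF assms(1,3), of K] by linarith
  qed
  also have "\<dots> = (1 + R) / R ^ p"
  proof -
    have "R ^ p = R ^ (p - 1) * R" using assms(2) by (metis One_nat_def Suc_pred le_numeral_extra(2) less_le_trans not_less_eq_eq pos2 power_Suc2 zero_less_Suc)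
    then show ?thesis by simp
  qed
  finally show ?thesis .
qed

lemma lattice2:
  assumes "0 \<le> \<theta>" "\<theta> \<le> 1"
  shows "(\<Sum>k<K. min 1 (1 / (real k + \<theta>) ^ 2)) \<le> 3"
proof -
  have "(\<Sum>k<K. min 1 (1 / (real k + \<theta>) ^ 2)) \<le> (\<Sum>k<K. (if k = 0 then 1 else 0) + Hp 1 2 (real k + \<theta>))"
  proof (rule sum_mono)
    fix k
    show "min 1 (1 / (real k + \<theta>) ^ 2) \<le> (if k = 0 then 1 else 0) + Hp 1 2 (real k + \<theta>)"
    proof (cases "k = 0")
      case True then show ?thesis by (simp add: Hp_def)
    next
      case False then have "1 \<le> real k + \<theta>" using assms by simp
      then show ?thesis using False by (simp add: Hp_def)
    qed
  qed
  also have "\<dots> = (\<Sum>k<K. (if k = 0 then 1 else 0)) + (\<Sum>k<K. Hp 1 2 (real k + \<theta>))"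
    by (rule sum.distrib)
  also have "(\<Sum>k<K. (if k = 0 then 1 else 0)) \<le> (1::real)" by (simp add: sum.delta)
  also have "(\<Sum>k<K. Hp 1 2 (real k + \<theta>)) \<le> 2" using lattice1[of 1 2 \<theta> K] assms by simp
  finally show ?thesis by simp
qed

lemma two_sided:
  fixes H :: "real \<Rightarrow> real"
  assumes "\<And>x. 0 \<le> H x" "\<And>a b. H (min a b) \<le> H a + H b"
  shows "(\<Sum>k<K. H (min (real k + \<theta>) (real K - real k - \<theta>)))
          \<le> (\<Sum>k<K. H (real k + \<theta>)) + (\<Sum>k<K. H (real k + (1 - \<theta>)))"
proof -
  have "(\<Sum>k<K. H (min (real k + \<theta>) (real K - real k - \<theta>))) \<le> (\<Sum>k<K. H (real k + \<theta>) + H (real K - real k - \<theta>))"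
    by (intro sum_mono assms(2))
  also have "\<dots> = (\<Sum>k<K. H (real k + \<theta>)) + (\<Sum>k<K. H (real K - real k - \<theta>))" by (rule sum.distrib)
  also have "(\<Sum>k<K. H (real K - real k - \<theta>)) = (\<Sum>k<K. H (real k + (1 - \<theta>)))"
  proof -
    have "(\<Sum>k<K. H (real k + (1 - \<theta>))) = (\<Sum>i<K. H (real (K - Suc i) + (1 - \<theta>)))"
      by (rule sum.nat_diff_reindex[symmetric])
    also have "\<dots> = (\<Sum>i<K. H (real K - real i - \<theta>))"
      by (intro sum.cong refl) (simp add: of_nat_diff algebra_simps)
    finally show ?thesis ..
  qed
  finally show ?thesis by simp
qed

lemma rotation:
  fixes F :: "nat \<Rightarrow> 'a::comm_monoid_add"
  shows "(\<Sum>i<K. F ((c + i) mod K)) = (\<Sum>k<K. F k)"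
proof (induction c)
  case 0 then show ?case by (intro sum.cong refl) simp
next
  case (Suc c)
  show ?case
  proof (cases K)
    case 0 then show ?thesis by simp
  next
    case (Suc K')
    define G where "G i = F ((c + i) mod K)" for i
    have "(\<Sum>i<K. F ((Suc c + i) mod K)) = (\<Sum>i<Suc K'. G (Suc i))" by (simp add: G_def Suc)
    also have "\<dots> = (\<Sum>i<K'. G (Suc i)) + G (Suc K')" by simp
    also have "G (Suc K') = G 0" by (simp add: G_def Suc[symmetric])
    also have "(\<Sum>i<K'. G (Suc i)) + G 0 = (\<Sum>i<Suc K'. G i)" by (simp only: sum.lessThan_Suc_shift add.commute)
    also have "\<dots> = (\<Sum>k<K. F k)" using Suc.IH by (simp add: G_def Suc)
    finally show ?thesis .
  qed
qed

lemma rot_row: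
  fixes F :: "nat \<Rightarrow> 'a::comm_monoid_add"
  assumes "n' < K"
  shows "(\<Sum>m<K. F ((n' + (K - m)) mod K)) = (\<Sum>k<K. F k)"
proof -
  have "(\<Sum>m<K. F ((n' + (K - m)) mod K)) = (\<Sum>i<K. F ((n' + (K - (K - Suc i))) mod K))"
    by (rule sum.nat_diff_reindex[symmetric])
  also have "\<dots> = (\<Sum>i<K. F ((Suc n' + i) mod K))"
    by (intro sum.cong refl) (simp add: Suc_diff_Suc)
  also have "\<dots> = (\<Sum>k<K. F k)" by (rule rotation)
  finally show ?thesis .
qed

lemma rot_col:
  fixes F :: "nat \<Rightarrow> 'a::comm_monoid_add"
  shows "(\<Sum>n'<K. F ((n' + (K - m)) mod K)) = (\<Sum>k<K. F k)"
proof -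
  have "(\<Sum>n'<K. F ((n' + (K - m)) mod K)) = (\<Sum>i<K. F ((K - m + i) mod K))" by (simp only: add.commute)
  also have "\<dots> = (\<Sum>k<K. F k)" by (rule rotation)
  finally show ?thesis .
qed

lemma tau_eq:
  fixes K M n' s m :: nat
  assumes K: "K \<ge> 1" and M: "M \<ge> 1" and s: "s < M" and n': "n' < K" and m: "m < K"
  shows "real K * circ_dist (real (M * n' + s) / real (K * M)) (real m / real K)
       = min (real ((n' + (K - m)) mod K) + real s / real M) (real K - real ((n' + (K - m)) mod K) - real s / real M)"
proof -
  define \<theta> where "\<theta> = real s / real M"
  have th: "0 \<le> \<theta>" "\<theta> < 1" using s M by (auto simp: \<theta>_def)
  have Kp: "real K > 0" using K by simp
  have yu: "real (M * n' + s) / real (K * M) - real m / real K = (real n' - real m + \<theta>) / real K"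
    using K M by (simp add: \<theta>_def field_simps)
  have cd: "real K * circ_dist (real (M * n' + s) / real (K * M)) (real m / real K)
            = min \<bar>real n' - real m + \<theta>\<bar> (real K - \<bar>real n' - real m + \<theta>\<bar>)"
    unfolding circ_dist_def yu using Kp by (simp add: abs_divide min_mult_distrib_left right_diff_distrib)
  show ?thesis
  proof (cases "m \<le> n'")
    case True
    then have "(n' + (K - m)) mod K = n' - m"
    proof -
      have e: "n' + (K - m) = (n' - m) + K" using True m by simp
      have "n' - m < K" using n' by linarith
      then show ?thesis unfolding e by simp
    qed
    moreover have "\<bar>real n' - real m + \<theta>\<bar> = real (n' - m) + \<theta>" using True th by (simp add: of_nat_diff)
    ultimately show ?thesis using cd by (simp add: \<theta>_def diff_diff_eq)
  next
    case False
    then have k: "(n' + (K - m)) mod K = n' + (K - m)" using m by simp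
    have "\<bar>real n' - real m + \<theta>\<bar> = real m - real n' - \<theta>" using False th by simp
    moreover have "real (n' + (K - m)) = real n' + real K - real m" using m by (simp add: of_nat_diff)
    ultimately show ?thesis using cd k by (simp add: \<theta>_def min.commute algebra_simps)
  qed
qed

lemma weighted_cs:
  fixes w x :: "nat \<Rightarrow> real"
  assumes "\<And>i. 0 \<le> w i"
  shows "(\<Sum>i\<in>I. w i * x i)\<^sup>2 \<le> (\<Sum>i\<in>I. w i) * (\<Sum>i\<in>I. w i * (x i)\<^sup>2)"
proof -
  have "(\<Sum>i\<in>I. sqrt (w i) * (sqrt (w i) * x i))\<^sup>2 \<le> (\<Sum>i\<in>I. (sqrt (w i))\<^sup>2) * (\<Sum>i\<in>I. (sqrt (w i) * x i)\<^sup>2)"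
    by (rule Cauchy_Schwarz_ineq_sum)
  moreover have "sqrt (w i) * (sqrt (w i) * x i) = w i * x i" for i using assms[of i]
    by (simp add: mult.assoc[symmetric])
  moreover have "(sqrt (w i))\<^sup>2 = w i" for i using assms[of i] by simp
  moreover have "(sqrt (w i) * x i)\<^sup>2 = w i * (x i)\<^sup>2" for i using assms[of i] by (simp add: power_mult_distrib)
  ultimately show ?thesis by simp
qed

lemma schur:
  fixes a :: "nat \<Rightarrow> nat \<Rightarrow> complex" and v :: "nat \<Rightarrow> complex"
  assumes row: "\<And>i. i < I \<Longrightarrow> (\<Sum>j<J. cmod (a i j)) \<le> \<alpha>"
    and col: "\<And>j. j < J \<Longrightarrow> (\<Sum>i<I. cmod (a i j)) \<le> \<beta>"
    and \<alpha>: "\<alpha> \<ge> 0"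
  shows "(\<Sum>i<I. (cmod (\<Sum>j<J. a i j * v j))\<^sup>2) \<le> \<alpha> * \<beta> * (\<Sum>j<J. (cmod (v j))\<^sup>2)"
proof -
  have "(\<Sum>i<I. (cmod (\<Sum>j<J. a i j * v j))\<^sup>2) \<le> (\<Sum>i<I. \<alpha> * (\<Sum>j<J. cmod (a i j) * (cmod (v j))\<^sup>2))"
  proof (rule sum_mono)
    fix i assume i: "i \<in> {..<I}"
    have "cmod (\<Sum>j<J. a i j * v j) \<le> (\<Sum>j<J. cmod (a i j) * cmod (v j))"
      by (rule order_trans[OF norm_sum]) (simp add: norm_mult)
    then have "(cmod (\<Sum>j<J. a i j * v j))\<^sup>2 \<le> (\<Sum>j<J. cmod (a i j) * cmod (v j))\<^sup>2"
      by (intro power_mono) auto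
    also have "\<dots> \<le> (\<Sum>j<J. cmod (a i j)) * (\<Sum>j<J. cmod (a i j) * (cmod (v j))\<^sup>2)"
      by (rule weighted_cs) simp
    also have "\<dots> \<le> \<alpha> * (\<Sum>j<J. cmod (a i j) * (cmod (v j))\<^sup>2)"
      using row i by (intro mult_right_mono sum_nonneg) auto
    finally show "(cmod (\<Sum>j<J. a i j * v j))\<^sup>2 \<le> \<alpha> * (\<Sum>j<J. cmod (a i j) * (cmod (v j))\<^sup>2)" .
  qed
  also have "\<dots> = \<alpha> * (\<Sum>j<J. (\<Sum>i<I. cmod (a i j)) * (cmod (v j))\<^sup>2)"
    by (simp add: sum_distrib_left[symmetric] sum_distrib_right sum.swap[of _ "{..<I}"])
  also have "\<dots> \<le> \<alpha> * (\<Sum>j<J. \<beta> * (cmod (v j))\<^sup>2)"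
    using col by (intro mult_left_mono[OF _ \<alpha>] sum_mono mult_right_mono) auto
  also have "\<dots> = \<alpha> * \<beta> * (\<Sum>j<J. (cmod (v j))\<^sup>2)" by (simp add: sum_distrib_left mult.assoc)
  finally show ?thesis .
qed


lemma block_ind:
  fixes j a b K :: nat
  assumes "j < K"
  shows "(a * K \<le> j + b * K \<and> j + b * K < (a + 1) * K) \<longleftrightarrow> b = a"
proof
  assume h: "a * K \<le> j + b * K \<and> j + b * K < (a + 1) * K"
  have "a * K < (b + 1) * K" using h assms by simp
  then have "a < b + 1" by (rule mult_right_less_imp_less) simp
  moreover have "b * K < (a + 1) * K" using h by linarith
  then have "b < a + 1" by (rule mult_right_less_imp_less) simp
  ultimately show "b = a" by simp
next
  assume "b = a" then show "a * K \<le> j + b * K \<and> j + b * K < (a + 1) * K" using assms by simp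
qed

lemma DFT_adj_Pi_adj:
  assumes "a < M"
  shows "DFT_adj (K * M) (Pi_adj K a Y) n
       = complex_of_real (1 / sqrt (real (K * M))) * (\<Sum>j<K. ee (real n * real (j + a * K) / real (K * M)) * Y j)"
proof -
  have "(\<Sum>l<K * M. ee (real n * real l / real (K * M)) * Pi_adj K a Y l)
      = (\<Sum>b<M. \<Sum>j<K. ee (real n * real (j + b * K) / real (K * M)) * Pi_adj K a Y (j + b * K))"
    by (rule sum_blocks)
  also have "\<dots> = (\<Sum>b<M. if b = a then (\<Sum>j<K. ee (real n * real (j + a * K) / real (K * M)) * Y j) else 0)"
  proof (rule sum.cong[OF refl])
    fix b
    have "(\<Sum>j<K. ee (real n * real (j + b * K) / real (K * M)) * Pi_adj K a Y (j + b * K))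
        = (\<Sum>j<K. if b = a then ee (real n * real (j + a * K) / real (K * M)) * Y j else 0)"
    proof (intro sum.cong refl)
      fix j assume "j \<in> {..<K}"
      then have j: "j < K" by simp
      have "Pi_adj K a Y (j + b * K) = (if b = a then Y j else 0)"
        unfolding Pi_adj_def using block_ind[OF j, of a b] by auto
      then show "ee (real n * real (j + b * K) / real (K * M)) * Pi_adj K a Y (j + b * K)
          = (if b = a then ee (real n * real (j + a * K) / real (K * M)) * Y j else 0)" by simp
    qed
    then show "(\<Sum>j<K. ee (real n * real (j + b * K) / real (K * M)) * Pi_adj K a Y (j + b * K))
        = (if b = a then (\<Sum>j<K. ee (real n * real (j + a * K) / real (K * M)) * Y j) else 0)"
      by simp
  qed
  also have "\<dots> = (\<Sum>j<K. ee (real n * real (j + a * K) / real (K * M)) * Y j)"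
    using assms by (simp add: sum.delta')
  finally show ?thesis by (simp add: DFT_adj_ee)
qed

lemma inner_sum:
  assumes "K \<ge> 1" "M \<ge> 1"
  shows "(\<Sum>j<K. complex_of_real (chi (real j / real K)) *
            (ee (real n * real (j + a * K) / real (K * M)) * ee (- (real j * real m / real K))))
       = ee (real n * real a / real M) * Sk chi K (real n / real (K * M) - real m / real K)"
proof -
  have e: "ee (real n * real (j + a * K) / real (K * M)) * ee (- (real j * real m / real K))
         = ee (real n * real a / real M) * ee (real j * (real n / real (K * M) - real m / real K))" for j
  proof -
    have "real n * real (j + a * K) / real (K * M) + - (real j * real m / real K)
        = real n * real a / real M + real j * (real n / real (K * M) - real m / real K)"
      using assms by (simp add: field_simps)
    then show ?thesis by (simp flip: ee_add)
  qed
  show ?thesis unfolding Sk_def sum_distrib_left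
    by (intro sum.cong refl) (subst e, rule mult.left_commute)
qed

lemma inner_block:
  assumes "K \<ge> 1" "M \<ge> 1"
  shows "(\<Sum>j<K. ee (real n * real (j + a * K) / real (K * M)) *
            (complex_of_real (chi (real j / real K)) * (c2 * (\<Sum>m<K. ee (- (real j * real m / real K)) * Z m))))
       = c2 * (\<Sum>m<K. ee (real n * real a / real M) * Sk chi K (real n / real (K * M) - real m / real K) * Z m)"
proof -
  have "(\<Sum>j<K. ee (real n * real (j + a * K) / real (K * M)) *
            (complex_of_real (chi (real j / real K)) * (c2 * (\<Sum>m<K. ee (- (real j * real m / real K)) * Z m))))
      = (\<Sum>j<K. c2 * (\<Sum>m<K. complex_of_real (chi (real j / real K)) *
            (ee (real n * real (j + a * K) / real (K * M)) * ee (- (real j * real m / real K))) * Z m))"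
    by (intro sum.cong refl) (simp add: sum_distrib_left mult_ac)
  also have "\<dots> = c2 * (\<Sum>m<K. \<Sum>j<K. complex_of_real (chi (real j / real K)) *
            (ee (real n * real (j + a * K) / real (K * M)) * ee (- (real j * real m / real K))) * Z m)"
    by (subst sum.swap) (simp only: sum_distrib_left)
  also have "\<dots> = c2 * (\<Sum>m<K. (\<Sum>j<K. complex_of_real (chi (real j / real K)) *
            (ee (real n * real (j + a * K) / real (K * M)) * ee (- (real j * real m / real K)))) * Z m)"
    by (simp only: sum_distrib_right)
  also have "\<dots> = c2 * (\<Sum>m<K. ee (real n * real a / real M) * Sk chi K (real n / real (K * M) - real m / real K) * Z m)"
    by (simp only: inner_sum[OF assms])
  finally show ?thesis .
qed

definition wv :: "(real \<Rightarrow> real) \<Rightarrow> (real \<Rightarrow> real) \<Rightarrow> nat \<Rightarrow> nat \<Rightarrow> (nat \<Rightarrow> complex) \<Rightarrow> nat \<Rightarrow> nat \<Rightarrow> complex" where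
  "wv chi \<psi> K M u a m = complex_of_real (chi (real m / real K)) *
      (complex_of_real (\<psi> (real (m + a * K) / real (K * M))) * u (m + a * K))"

lemma T1_formula:
  assumes K: "K \<ge> 1" and M: "M \<ge> 1" and A: "A \<subseteq> {0..<M}"
  shows "mult_op (K * M) \<phi> (baker M K A chi (mult_op (K * M) \<psi> u)) n
       = complex_of_real (\<phi> (real n / real (K * M))) *
         (complex_of_real (1 / sqrt (real (K * M))) * complex_of_real (1 / sqrt (real K)) *
          (\<Sum>a\<in>A. \<Sum>m<K. ee (real n * real a / real M) * Sk chi K (real n / real (K * M) - real m / real K)
                          * wv chi \<psi> K M u a m))"
proof -
  let ?c1 = "complex_of_real (1 / sqrt (real (K * M)))"
  let ?c2 = "complex_of_real (1 / sqrt (real K))"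
  have "baker M K A chi (mult_op (K * M) \<psi> u) n
      = (\<Sum>a\<in>A. ?c1 * (?c2 * (\<Sum>m<K. ee (real n * real a / real M) * Sk chi K (real n / real (K * M) - real m / real K)
                          * wv chi \<psi> K M u a m)))"
    unfolding baker_def
  proof (rule sum.cong[OF refl])
    fix a assume "a \<in> A"
    then have a: "a < M" using A by auto
    show "DFT_adj (K * M) (Pi_adj K a (mult_op K chi (DFT K (mult_op K chi (Pi_op K a (mult_op (K * M) \<psi> u)))))) n
        = ?c1 * (?c2 * (\<Sum>m<K. ee (real n * real a / real M) * Sk chi K (real n / real (K * M) - real m / real K)
                          * wv chi \<psi> K M u a m))"
      unfolding DFT_adj_Pi_adj[OF a]
      unfolding mult_op_def DFT_ee Pi_op_def
      by (subst inner_block[OF K M, symmetric]) (simp add: wv_def mult.assoc)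
  qed
  then show ?thesis by (simp add: mult_op_def sum_distrib_left mult.assoc)
qed

lemma inner_sum2:
  assumes "K \<ge> 1" "M \<ge> 1"
  shows "(\<Sum>m<K. complex_of_real (chi (real m / real K)) *
            (ee (- (real j * real m / real K)) * ee (real (m + b * K) * real n / real (K * M))))
       = ee (real n * real b / real M) * Sk chi K (real n / real (K * M) - real j / real K)"
proof -
  have "(\<Sum>m<K. complex_of_real (chi (real m / real K)) *
            (ee (- (real j * real m / real K)) * ee (real (m + b * K) * real n / real (K * M))))
      = (\<Sum>m<K. complex_of_real (chi (real m / real K)) *
            (ee (real n * real (m + b * K) / real (K * M)) * ee (- (real m * real j / real K))))"
    by (intro sum.cong refl) (simp only: mult.commute)
  also have "\<dots> = ee (real n * real b / real M) * Sk chi K (real n / real (K * M) - real j / real K)"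
    by (rule inner_sum[OF assms])
  finally show ?thesis .
qed

lemma inner_block2:
  assumes "K \<ge> 1" "M \<ge> 1"
  shows "(\<Sum>m<K. ee (- (real j * real m / real K)) * (complex_of_real (chi (real m / real K)) *
            (cc * (\<Sum>n<K * M. ee (real (m + b * K) * real n / real (K * M)) * F n))))
       = cc * (\<Sum>n<K * M. ee (real n * real b / real M) * Sk chi K (real n / real (K * M) - real j / real K) * F n)"
proof -
  have "(\<Sum>m<K. ee (- (real j * real m / real K)) * (complex_of_real (chi (real m / real K)) *
            (cc * (\<Sum>n<K * M. ee (real (m + b * K) * real n / real (K * M)) * F n))))
      = (\<Sum>m<K. cc * (\<Sum>n<K * M. complex_of_real (chi (real m / real K)) *
            (ee (- (real j * real m / real K)) * ee (real (m + b * K) * real n / real (K * M))) * F n))"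
    by (intro sum.cong refl) (simp add: sum_distrib_left mult_ac)
  also have "\<dots> = cc * (\<Sum>n<K * M. \<Sum>m<K. complex_of_real (chi (real m / real K)) *
            (ee (- (real j * real m / real K)) * ee (real (m + b * K) * real n / real (K * M))) * F n)"
    by (subst sum.swap) (simp only: sum_distrib_left)
  also have "\<dots> = cc * (\<Sum>n<K * M. (\<Sum>m<K. complex_of_real (chi (real m / real K)) *
            (ee (- (real j * real m / real K)) * ee (real (m + b * K) * real n / real (K * M)))) * F n)"
    by (simp only: sum_distrib_right)
  also have "\<dots> = cc * (\<Sum>n<K * M. ee (real n * real b / real M) * Sk chi K (real n / real (K * M) - real j / real K) * F n)"
    by (simp only: inner_sum2[OF assms])
  finally show ?thesis .
qed

definition Dop :: "nat \<Rightarrow> nat \<Rightarrow> nat set \<Rightarrow> (real \<Rightarrow> real) \<Rightarrow> (nat \<Rightarrow> complex) \<Rightarrow> nat \<Rightarrow> complex" where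
  "Dop M K A chi v = (\<lambda>i. \<Sum>a\<in>A. Pi_adj K a (mult_op K chi (DFT K (mult_op K chi (Pi_op K a v)))) i)"

lemma baker_Dop: "baker M K A chi v = DFT_adj (K * M) (Dop M K A chi v)"
proof (rule ext)
  fix n
  show "baker M K A chi v n = DFT_adj (K * M) (Dop M K A chi v) n"
    unfolding baker_def Dop_def DFT_adj_def
    by (simp add: scaleR_sum_right sum_distrib_left sum.swap[of _ A])
qed

lemma T2_reduce:
  assumes "K \<ge> 1" "M \<ge> 1"
  shows "(\<Sum>j<K * M. (cmod ((fourier_mult_op (K * M) \<psi> \<circ> baker M K A chi \<circ> fourier_mult_op (K * M) \<phi>) u j))\<^sup>2)
       = (\<Sum>j<K * M. (cmod (mult_op (K * M) \<psi> (Dop M K A chi (DFT_adj (K * M) (mult_op (K * M) \<phi> (DFT (K * M) u)))) j))\<^sup>2)"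
proof -
  have N: "K * M \<ge> 1" using assms by simp
  have "(\<Sum>j<K * M. (cmod ((fourier_mult_op (K * M) \<psi> \<circ> baker M K A chi \<circ> fourier_mult_op (K * M) \<phi>) u j))\<^sup>2)
      = (\<Sum>j<K * M. (cmod (mult_op (K * M) \<psi> (DFT (K * M) (baker M K A chi (DFT_adj (K * M) (mult_op (K * M) \<phi> (DFT (K * M) u))))) j))\<^sup>2)"
    unfolding fourier_mult_op_def comp_def by (rule sumsq_DFT_adj[OF N])
  also have "\<dots> = (\<Sum>j<K * M. (cmod (mult_op (K * M) \<psi> (Dop M K A chi (DFT_adj (K * M) (mult_op (K * M) \<phi> (DFT (K * M) u)))) j))\<^sup>2)"
    by (intro sum.cong refl) (simp add: mult_op_def baker_Dop DFT_DFT_adj[OF N])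
  finally show ?thesis .
qed

lemma Dop_block:
  assumes "j < K" "finite A"
  shows "Dop M K A chi v (j + b * K) = (if b \<in> A then mult_op K chi (DFT K (mult_op K chi (Pi_op K b v))) j else 0)"
proof -
  have "Dop M K A chi v (j + b * K) = (\<Sum>a\<in>A. if a = b then mult_op K chi (DFT K (mult_op K chi (Pi_op K a v))) j else 0)"
    unfolding Dop_def
  proof (rule sum.cong[OF refl])
    fix a
    show "Pi_adj K a (mult_op K chi (DFT K (mult_op K chi (Pi_op K a v)))) (j + b * K)
        = (if a = b then mult_op K chi (DFT K (mult_op K chi (Pi_op K a v))) j else 0)"
      unfolding Pi_adj_def using block_ind[OF assms(1), of a b] by auto
  qed
  also have "\<dots> = (if b \<in> A then mult_op K chi (DFT K (mult_op K chi (Pi_op K b v))) j else 0)"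
    using assms(2) by (simp add: sum.delta)
  finally show ?thesis .
qed

lemma T2_formula:
  assumes K: "K \<ge> 1" and M: "M \<ge> 1" and j: "j < K" and A: "finite A"
  shows "mult_op (K * M) \<psi> (Dop M K A chi (DFT_adj (K * M) (mult_op (K * M) \<phi> w))) (j + b * K)
       = (if b \<in> A then complex_of_real (\<psi> (real (j + b * K) / real (K * M))) * complex_of_real (chi (real j / real K)) *
           (complex_of_real (1 / sqrt (real K)) * complex_of_real (1 / sqrt (real (K * M))) *
            (\<Sum>n<K * M. ee (real n * real b / real M) * Sk chi K (real n / real (K * M) - real j / real K)
                 * (complex_of_real (\<phi> (real n / real (K * M))) * w n)))
          else 0)"
proof (cases "b \<in> A")
  case False then show ?thesis by (simp add: mult_op_def Dop_block[OF j A])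
next
  case True
  let ?c1 = "complex_of_real (1 / sqrt (real (K * M)))"
  let ?c2 = "complex_of_real (1 / sqrt (real K))"
  have "DFT K (mult_op K chi (Pi_op K b (DFT_adj (K * M) (mult_op (K * M) \<phi> w)))) j
      = ?c2 * (\<Sum>m<K. ee (- (real j * real m / real K)) * (complex_of_real (chi (real m / real K)) *
            (?c1 * (\<Sum>n<K * M. ee (real (m + b * K) * real n / real (K * M)) * (complex_of_real (\<phi> (real n / real (K * M))) * w n)))))"
    by (simp add: DFT_ee DFT_adj_ee mult_op_def Pi_op_def)
  also have "\<dots> = ?c2 * (?c1 * (\<Sum>n<K * M. ee (real n * real b / real M) * Sk chi K (real n / real (K * M) - real j / real K)
                 * (complex_of_real (\<phi> (real n / real (K * M))) * w n)))"
    using inner_block2[OF K M, where j=j and cc="?c1" and b=b and F="\<lambda>n. complex_of_real (\<phi> (real n / real (K * M))) * w n" and chi=chi] by simp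
  finally show ?thesis using True by (simp add: mult_op_def Dop_block[OF j A] mult.assoc)
qed


locale opctx =
  fixes M K :: nat and A :: "nat set" and \<phi> \<psi> chi :: "real \<Rightarrow> real" and r :: real
    and \<Psi> :: "real \<Rightarrow> real" and L :: real
  assumes K: "K \<ge> 1" and M: "M \<ge> 1" and A: "A \<subseteq> {0..<M}"
    and phi: "\<forall>x\<in>{0..1}. 0 \<le> \<phi> x \<and> \<phi> x \<le> 1"
    and psi: "\<forall>x\<in>{0..1}. 0 \<le> \<psi> x \<and> \<psi> x \<le> 1"
    and r: "0 < r"
    and hchi: "ereal (real M * r) \<le> 2 * circ_setdist (supp chi) {0}"
    and hsep: "circ_setdist (supp01 \<psi>) (Phi_preimage M A (supp01 \<phi>)) \<ge> ereal r"
    and ch: "cutoff chi"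
    and Psi_nn: "\<forall>x. real (K * M) * r / 2 \<le> x \<longrightarrow> 0 \<le> \<Psi> x"
    and Psi_bd: "\<forall>y u. y \<in> {0..1} \<longrightarrow> u \<in> {0..1} \<longrightarrow> real (K * M) * r / 2 \<le> real K * circ_dist y u \<longrightarrow>
                   cmod (Sk chi K (y - u)) \<le> real K * \<Psi> (real K * circ_dist y u)"
    and lat: "\<forall>\<theta>. 0 \<le> \<theta> \<longrightarrow> \<theta> < 1 \<longrightarrow>
               (\<Sum>k<K. if real (K * M) * r / 2 \<le> min (real k + \<theta>) (real K - real k - \<theta>)
                        then \<Psi> (min (real k + \<theta>) (real K - real k - \<theta>)) else 0) \<le> L"
begin

abbreviation "N \<equiv> K * M"
abbreviation "R \<equiv> real (K * M) * r / 2"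

definition Hh :: "real \<Rightarrow> real" where "Hh x = (if R \<le> x then \<Psi> x else 0)"

lemma Hh_nn: "0 \<le> Hh x" using Psi_nn by (simp add: Hh_def)

lemma finA: "finite A" using A finite_subset by blast

lemma L_nn: "0 \<le> L"
proof -
  have "0 \<le> (\<Sum>k<K. if R \<le> min (real k + 0) (real K - real k - 0)
                        then \<Psi> (min (real k + 0) (real K - real k - 0)) else 0)"
    by (intro sum_nonneg) (simp add: Psi_nn)
  also have "\<dots> \<le> L" by (rule lat[rule_format]) simp_all
  finally show ?thesis .
qed

definition Xp :: "nat \<Rightarrow> bool" where
  "Xp m \<longleftrightarrow> chi (real m / real K) \<noteq> 0 \<and> (\<exists>a\<in>A. \<psi> (real (m + a * K) / real N) \<noteq> 0)"

definition kern :: "nat \<Rightarrow> nat \<Rightarrow> nat \<Rightarrow> complex" where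
  "kern s n' m = (if \<phi> (real (M * n' + s) / real N) \<noteq> 0 \<and> Xp m
      then Sk chi K (real (M * n' + s) / real N - real m / real K) else 0)"

lemma idx_lt: "s < M \<Longrightarrow> n' < K \<Longrightarrow> M * n' + s < N"
proof -
  assume "s < M" "n' < K"
  then have "M * n' + s < M * n' + M" by simp
  also have "\<dots> = M * (n' + 1)" by simp
  also have "\<dots> \<le> M * K" using \<open>n' < K\<close> by (intro mult_left_mono) auto
  finally show ?thesis by (simp add: mult.commute)
qed

lemma kern_bound:
  assumes s: "s < M" and n': "n' < K" and m: "m < K"
  shows "cmod (kern s n' m) \<le> real K * Hh (real K * circ_dist (real (M * n' + s) / real N) (real m / real K))"
proof (cases "\<phi> (real (M * n' + s) / real N) \<noteq> 0 \<and> Xp m")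
  case False
  then have "kern s n' m = 0" by (auto simp: kern_def)
  then show ?thesis using Hh_nn by simp
next
  case True
  then obtain a where a: "a \<in> A" "\<psi> (real (m + a * K) / real N) \<noteq> 0" and c: "chi (real m / real K) \<noteq> 0"
    by (auto simp: Xp_def)
  have aM: "a < M" using a A by auto
  have lt: "M * n' + s < N" by (rule idx_lt[OF s n'])
  have "real M * r / 2 \<le> circ_dist (real (M * n' + s) / real N) (real m / real K)"
    by (rule sep[OF K M r ch hchi hsep lt _ m c a(1) aM a(2)]) (use True in simp)
  then have Rt: "R \<le> real K * circ_dist (real (M * n' + s) / real N) (real m / real K)"
    using K by (simp add: mult_left_mono[of _ _ "real K"] mult.assoc)
  have lt': "real (M * n' + s) < real N" using lt by (simp only: of_nat_less_iff)
  then have y: "real (M * n' + s) / real N \<in> {0..1}" using K M by (auto simp: divide_le_eq_1)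
  have u: "real m / real K \<in> {0..1}" using m by auto
  show ?thesis using True Psi_bd[rule_format, OF y u Rt] Rt by (simp add: kern_def Hh_def)
qed

lemma row_bound:
  assumes s: "s < M" and n': "n' < K"
  shows "(\<Sum>m<K. cmod (kern s n' m)) \<le> real K * L"
proof -
  define \<theta> where "\<theta> = real s / real M"
  define F where "F k = Hh (min (real k + \<theta>) (real K - real k - \<theta>))" for k
  have th: "0 \<le> \<theta>" "\<theta> < 1" using s M by (auto simp: \<theta>_def)
  have "(\<Sum>m<K. cmod (kern s n' m)) \<le> (\<Sum>m<K. real K * F ((n' + (K - m)) mod K))"
  proof (rule sum_mono)
    fix m assume "m \<in> {..<K}"
    then have m: "m < K" by simp
    show "cmod (kern s n' m) \<le> real K * F ((n' + (K - m)) mod K)"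
      using kern_bound[OF s n' m] tau_eq[OF K M s n' m] by (simp add: F_def \<theta>_def)
  qed
  also have "\<dots> = real K * (\<Sum>k<K. F k)" by (simp only: sum_distrib_left[symmetric] rot_row[OF n'])
  also have "\<dots> \<le> real K * L"
    using lat[rule_format, OF th] by (intro mult_left_mono) (auto simp: F_def Hh_def)
  finally show ?thesis .
qed

lemma col_bound:
  assumes s: "s < M" and m: "m < K"
  shows "(\<Sum>n'<K. cmod (kern s n' m)) \<le> real K * L"
proof -
  define \<theta> where "\<theta> = real s / real M"
  define F where "F k = Hh (min (real k + \<theta>) (real K - real k - \<theta>))" for k
  have th: "0 \<le> \<theta>" "\<theta> < 1" using s M by (auto simp: \<theta>_def)
  have "(\<Sum>n'<K. cmod (kern s n' m)) \<le> (\<Sum>n'<K. real K * F ((n' + (K - m)) mod K))"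
  proof (rule sum_mono)
    fix n' assume "n' \<in> {..<K}"
    then have n': "n' < K" by simp
    show "cmod (kern s n' m) \<le> real K * F ((n' + (K - m)) mod K)"
      using kern_bound[OF s n' m] tau_eq[OF K M s n' m] by (simp add: F_def \<theta>_def)
  qed
  also have "\<dots> = real K * (\<Sum>k<K. F k)" by (simp only: sum_distrib_left[symmetric] rot_col)
  also have "\<dots> \<le> real K * L"
    using lat[rule_format, OF th] by (intro mult_left_mono) (auto simp: F_def Hh_def)
  finally show ?thesis .
qed

definition cc :: complex where
  "cc = complex_of_real (1 / sqrt (real N)) * complex_of_real (1 / sqrt (real K))"

lemma cc_sq: "(cmod cc)\<^sup>2 * (real K * real K * real M) = 1"
proof -
  have "cmod cc = \<bar>1 / sqrt (real N)\<bar> * \<bar>1 / sqrt (real K)\<bar>" unfolding cc_def norm_mult norm_of_real ..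
  then have "(cmod cc)\<^sup>2 = (1 / sqrt (real N))\<^sup>2 * (1 / sqrt (real K))\<^sup>2" by (simp only: power_mult_distrib power2_abs)
  also have "\<dots> = 1 / (real K * real M) * (1 / real K)" by (simp add: power_divide)
  finally have "(cmod cc)\<^sup>2 = 1 / (real K * real M) * (1 / real K)" .
  then show ?thesis using K M by (simp add: field_simps)
qed

definition W :: "(nat \<Rightarrow> complex) \<Rightarrow> nat \<Rightarrow> nat \<Rightarrow> complex" where
  "W u s m = (\<Sum>a\<in>A. ee (real s * real a / real M) * wv chi \<psi> K M u a m)"

lemma ee_shift: "ee (real (M * n' + s) * real a / real M) = ee (real s * real a / real M)"
proof -
  have "real (M * n' + s) * real a / real M = real (n' * a) + real s * real a / real M"
    using M by (simp add: field_simps)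
  then have "ee (real (M * n' + s) * real a / real M) = ee (real (n' * a)) * ee (real s * real a / real M)"
    by (simp only: ee_add)
  then show ?thesis by (simp only: ee_nat mult_1_left)
qed

lemma wv_zero: "\<not> Xp m \<Longrightarrow> a \<in> A \<Longrightarrow> wv chi \<psi> K M u a m = 0"
  unfolding Xp_def wv_def by auto

lemma T1_point:
  assumes s: "s < M" and n': "n' < K"
  shows "cmod (mult_op N \<phi> (baker M K A chi (mult_op N \<psi> u)) (M * n' + s))
         \<le> cmod cc * cmod (\<Sum>m<K. kern s n' m * W u s m)"
proof -
  let ?n = "M * n' + s"
  let ?t = "\<lambda>m. real ?n / real N - real m / real K"
  have S1: "(\<Sum>a\<in>A. \<Sum>m<K. ee (real ?n * real a / real M) * Sk chi K (?t m) * wv chi \<psi> K M u a m)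
          = (\<Sum>m<K. Sk chi K (?t m) * W u s m)"
    unfolding W_def ee_shift
    by (subst sum.swap) (simp add: sum_distrib_left sum_distrib_right mult_ac)
  have T: "mult_op N \<phi> (baker M K A chi (mult_op N \<psi> u)) ?n
         = complex_of_real (\<phi> (real ?n / real N)) * (cc * (\<Sum>m<K. Sk chi K (?t m) * W u s m))"
    unfolding T1_formula[OF K M A] S1 cc_def ..
  show ?thesis
  proof (cases "\<phi> (real ?n / real N) = 0")
    case True then show ?thesis unfolding T by simp
  next
    case False
    have S2: "(\<Sum>m<K. Sk chi K (?t m) * W u s m) = (\<Sum>m<K. kern s n' m * W u s m)"
    proof (intro sum.cong refl)
      fix m
      show "Sk chi K (?t m) * W u s m = kern s n' m * W u s m"
      proof (cases "Xp m")
        case True then show ?thesis using False by (simp add: kern_def)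
      next
        case False
        then have "W u s m = 0" unfolding W_def by (simp add: wv_zero)
        then show ?thesis by simp
      qed
    qed
    have lt: "real ?n < real N" using idx_lt[OF s n'] by (simp only: of_nat_less_iff)
    then have "real ?n / real N \<in> {0..1}" using K M by (auto simp: divide_le_eq_1)
    then have ph: "\<bar>\<phi> (real ?n / real N)\<bar> \<le> 1" using phi by auto
    have "cmod (mult_op N \<phi> (baker M K A chi (mult_op N \<psi> u)) ?n)
        = \<bar>\<phi> (real ?n / real N)\<bar> * (cmod cc * cmod (\<Sum>m<K. kern s n' m * W u s m))"
      unfolding T S2 by (simp add: norm_mult)
    also have "\<dots> \<le> 1 * (cmod cc * cmod (\<Sum>m<K. kern s n' m * W u s m))"
      by (rule mult_right_mono[OF ph]) simp
    finally show ?thesis by simp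
  qed
qed

lemma W_parseval:
  assumes mK: "m < K"
  shows "(\<Sum>s<M. (cmod (W u s m))\<^sup>2) \<le> real M * (\<Sum>a<M. (cmod (u (m + a * K)))\<^sup>2)"
proof -
  define c where "c a = (if a \<in> A then wv chi \<psi> K M u a m else 0)" for a
  have Wc: "W u s m = (\<Sum>a<M. ee (real s * real a / real M) * c a)" for s
  proof -
    have "(\<Sum>a<M. ee (real s * real a / real M) * c a) = (\<Sum>a\<in>{..<M} \<inter> A. ee (real s * real a / real M) * wv chi \<psi> K M u a m)"
      unfolding c_def by (simp add: sum.inter_restrict[symmetric] if_distrib cong: if_cong)
    also have "{..<M} \<inter> A = A" using A by auto
    finally show ?thesis unfolding W_def ..
  qed
  have "(\<Sum>s<M. (cmod (W u s m))\<^sup>2) = real M * (\<Sum>a<M. (cmod (c a))\<^sup>2)"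
    unfolding Wc by (rule parseval_ee[OF M])
  also have "\<dots> \<le> real M * (\<Sum>a<M. (cmod (u (m + a * K)))\<^sup>2)"
  proof (intro mult_left_mono sum_mono)
    fix a assume "a \<in> {..<M}"
    have "cmod (c a) \<le> cmod (u (m + a * K))"
    proof (cases "a \<in> A")
      case False then show ?thesis by (simp add: c_def)
    next
      case True
      have c1: "\<bar>chi (real m / real K)\<bar> \<le> 1" using ch unfolding cutoff_def by (simp add: abs_le_iff)
      have "m + a * K < K + a * K" using \<open>m < K\<close> by simp
      also have "\<dots> = (a + 1) * K" by simp
      also have "\<dots> \<le> M * K" using \<open>a \<in> {..<M}\<close> by (intro mult_right_mono) auto
      finally have "real (m + a * K) < real N" by (simp only: of_nat_less_iff mult.commute)
      then have "real (m + a * K) / real N \<in> {0..1}" using K M by (auto simp: divide_le_eq_1)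
      then have c2: "\<bar>\<psi> (real (m + a * K) / real N)\<bar> \<le> 1" using psi by auto
      have "cmod (c a) = \<bar>chi (real m / real K)\<bar> * (\<bar>\<psi> (real (m + a * K) / real N)\<bar> * cmod (u (m + a * K)))"
        using True by (simp add: c_def wv_def norm_mult)
      also have "\<dots> \<le> 1 * (1 * cmod (u (m + a * K)))"
        by (intro mult_mono c1 c2) auto
      finally show ?thesis by simp
    qed
    then show "(cmod (c a))\<^sup>2 \<le> (cmod (u (m + a * K)))\<^sup>2" by (intro power_mono) auto
  qed simp
  finally show ?thesis .
qed

lemma est1: "(\<Sum>n<N. (cmod (mult_op N \<phi> (baker M K A chi (mult_op N \<psi> u)) n))\<^sup>2) \<le> L\<^sup>2 * (\<Sum>n<N. (cmod (u n))\<^sup>2)"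
proof -
  let ?T = "mult_op N \<phi> (baker M K A chi (mult_op N \<psi> u))"
  have KL: "0 \<le> real K * L" using L_nn by simp
  have "(\<Sum>n<N. (cmod (?T n))\<^sup>2) = (\<Sum>s<M. \<Sum>n'<K. (cmod (?T (M * n' + s)))\<^sup>2)"
    by (rule sum_mod_split)
  also have "\<dots> \<le> (\<Sum>s<M. \<Sum>n'<K. (cmod cc)\<^sup>2 * (cmod (\<Sum>m<K. kern s n' m * W u s m))\<^sup>2)"
  proof (intro sum_mono)
    fix s n' assume "s \<in> {..<M}" "n' \<in> {..<K}"
    then have "cmod (?T (M * n' + s)) \<le> cmod cc * cmod (\<Sum>m<K. kern s n' m * W u s m)"
      by (intro T1_point) auto
    then show "(cmod (?T (M * n' + s)))\<^sup>2 \<le> (cmod cc)\<^sup>2 * (cmod (\<Sum>m<K. kern s n' m * W u s m))\<^sup>2"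
      by (metis norm_ge_zero power_mono power_mult_distrib)
  qed
  also have "\<dots> = (cmod cc)\<^sup>2 * (\<Sum>s<M. \<Sum>n'<K. (cmod (\<Sum>m<K. kern s n' m * W u s m))\<^sup>2)"
    by (simp add: sum_distrib_left)
  also have "\<dots> \<le> (cmod cc)\<^sup>2 * (\<Sum>s<M. (real K * L) * (real K * L) * (\<Sum>m<K. (cmod (W u s m))\<^sup>2))"
  proof (intro mult_left_mono sum_mono)
    fix s assume "s \<in> {..<M}"
    then have s: "s < M" by simp
    show "(\<Sum>n'<K. (cmod (\<Sum>m<K. kern s n' m * W u s m))\<^sup>2) \<le> real K * L * (real K * L) * (\<Sum>m<K. (cmod (W u s m))\<^sup>2)"
      by (rule schur[OF row_bound[OF s] col_bound[OF s] KL])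
  qed simp
  also have "\<dots> = (cmod cc)\<^sup>2 * ((real K * L) * (real K * L)) * (\<Sum>m<K. \<Sum>s<M. (cmod (W u s m))\<^sup>2)"
    by (simp add: sum_distrib_left[symmetric] sum.swap[of _ "{..<M}"] mult.assoc)
  also have "\<dots> \<le> (cmod cc)\<^sup>2 * ((real K * L) * (real K * L)) * (\<Sum>m<K. real M * (\<Sum>a<M. (cmod (u (m + a * K)))\<^sup>2))"
    by (intro mult_left_mono sum_mono W_parseval) auto
  also have "(\<Sum>m<K. real M * (\<Sum>a<M. (cmod (u (m + a * K)))\<^sup>2)) = real M * (\<Sum>n<N. (cmod (u n))\<^sup>2)"
    by (simp add: sum_distrib_left[symmetric] sum_blocks sum.swap[of _ "{..<K}"])
  also have "(cmod cc)\<^sup>2 * ((real K * L) * (real K * L)) * (real M * (\<Sum>n<N. (cmod (u n))\<^sup>2))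
           = ((cmod cc)\<^sup>2 * (real K * real K * real M)) * L\<^sup>2 * (\<Sum>n<N. (cmod (u n))\<^sup>2)"
    by (simp add: power2_eq_square mult_ac)
  also have "\<dots> = L\<^sup>2 * (\<Sum>n<N. (cmod (u n))\<^sup>2)" by (simp add: cc_sq)
  finally show ?thesis .
qed

definition V :: "(nat \<Rightarrow> complex) \<Rightarrow> nat \<Rightarrow> nat \<Rightarrow> complex" where
  "V w s n' = complex_of_real (\<phi> (real (M * n' + s) / real N)) * w (M * n' + s)"

lemma T2_point:
  assumes b: "b < M" and j: "j < K"
  shows "cmod (mult_op N \<psi> (Dop M K A chi (DFT_adj N (mult_op N \<phi> w))) (j + b * K))
         \<le> cmod cc * cmod (\<Sum>s<M. ee (real b * real s / real M) * (\<Sum>n'<K. kern s n' j * V w s n'))"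
proof (cases "b \<in> A \<and> Xp j")
  case False
  have "mult_op N \<psi> (Dop M K A chi (DFT_adj N (mult_op N \<phi> w))) (j + b * K) = 0"
  proof (cases "b \<in> A")
    case True
    with False have "\<not> Xp j" by simp
    with True have "chi (real j / real K) = 0 \<or> \<psi> (real (j + b * K) / real N) = 0" unfolding Xp_def by auto
    then show ?thesis unfolding T2_formula[OF K M j finA] using True by auto
  next
    case False then show ?thesis unfolding T2_formula[OF K M j finA] by simp
  qed
  then show ?thesis by simp
next
  case True
  let ?t = "\<lambda>n. real n / real N - real j / real K"
  have S: "(\<Sum>n<N. ee (real n * real b / real M) * Sk chi K (?t n) * (complex_of_real (\<phi> (real n / real N)) * w n))
      = (\<Sum>s<M. ee (real b * real s / real M) * (\<Sum>n'<K. kern s n' j * V w s n'))"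
  proof -
    have "(\<Sum>n<N. ee (real n * real b / real M) * Sk chi K (?t n) * (complex_of_real (\<phi> (real n / real N)) * w n))
        = (\<Sum>s<M. \<Sum>n'<K. ee (real (M * n' + s) * real b / real M) * Sk chi K (?t (M * n' + s)) *
                (complex_of_real (\<phi> (real (M * n' + s) / real N)) * w (M * n' + s)))"
      by (rule sum_mod_split)
    also have "\<dots> = (\<Sum>s<M. \<Sum>n'<K. ee (real b * real s / real M) * (kern s n' j * V w s n'))"
    proof (intro sum.cong refl)
      fix s n'
      have e: "ee (real (M * n' + s) * real b / real M) = ee (real b * real s / real M)"
      proof -
        have "ee (real (M * n' + s) * real b / real M) = ee (real s * real b / real M)" by (rule ee_shift)
        also have "real s * real b = real b * real s" by (rule mult.commute)
        finally show ?thesis .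
      qed
      show "ee (real (M * n' + s) * real b / real M) * Sk chi K (?t (M * n' + s)) *
                (complex_of_real (\<phi> (real (M * n' + s) / real N)) * w (M * n' + s))
          = ee (real b * real s / real M) * (kern s n' j * V w s n')"
        unfolding e using True by (auto simp: kern_def V_def)
    qed
    also have "\<dots> = (\<Sum>s<M. ee (real b * real s / real M) * (\<Sum>n'<K. kern s n' j * V w s n'))"
      by (simp add: sum_distrib_left)
    finally show ?thesis .
  qed
  have pt: "real (j + b * K) / real N \<in> {0..1}"
  proof -
    have "j + b * K < K + b * K" using j by simp
    also have "\<dots> = (b + 1) * K" by simp
    also have "\<dots> \<le> M * K" using b by (intro mult_right_mono) auto
    finally have "real (j + b * K) < real N" by (simp only: of_nat_less_iff mult.commute)
    then show ?thesis using K M by (auto simp: divide_le_eq_1)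
  qed
  have c1: "\<bar>\<psi> (real (j + b * K) / real N)\<bar> \<le> 1" using psi pt by auto
  have c2: "\<bar>chi (real j / real K)\<bar> \<le> 1" using ch unfolding cutoff_def by (simp add: abs_le_iff)
  have bA: "b \<in> A" using True by simp
  let ?X = "\<Sum>s<M. ee (real b * real s / real M) * (\<Sum>n'<K. kern s n' j * V w s n')"
  let ?c1 = "complex_of_real (1 / sqrt (real N))"
  let ?c2 = "complex_of_real (1 / sqrt (real K))"
  have v: "mult_op N \<psi> (Dop M K A chi (DFT_adj N (mult_op N \<phi> w))) (j + b * K)
      = complex_of_real (\<psi> (real (j + b * K) / real N)) * complex_of_real (chi (real j / real K)) * (?c2 * ?c1 * ?X)"
    unfolding T2_formula[OF K M j finA] S using bA by (simp only: if_True)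
  have cc2: "cmod (?c2 * ?c1) = cmod cc" unfolding cc_def by (simp only: mult.commute)
  have "cmod (mult_op N \<psi> (Dop M K A chi (DFT_adj N (mult_op N \<phi> w))) (j + b * K))
      = \<bar>\<psi> (real (j + b * K) / real N)\<bar> * \<bar>chi (real j / real K)\<bar> * (cmod cc * cmod ?X)"
    unfolding v norm_mult norm_of_real cc2[symmetric] ..
  also have "\<dots> \<le> 1 * 1 * (cmod cc * cmod (\<Sum>s<M. ee (real b * real s / real M) * (\<Sum>n'<K. kern s n' j * V w s n')))"
    by (intro mult_right_mono mult_mono c1 c2) auto
  finally show ?thesis by simp
qed

lemma est2: "(\<Sum>i<N. (cmod (mult_op N \<psi> (Dop M K A chi (DFT_adj N (mult_op N \<phi> w))) i))\<^sup>2) \<le> L\<^sup>2 * (\<Sum>n<N. (cmod (w n))\<^sup>2)"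
proof -
  let ?T = "mult_op N \<psi> (Dop M K A chi (DFT_adj N (mult_op N \<phi> w)))"
  let ?Z = "\<lambda>s j. \<Sum>n'<K. kern s n' j * V w s n'"
  have KL: "0 \<le> real K * L" using L_nn by simp
  have "(\<Sum>i<N. (cmod (?T i))\<^sup>2) = (\<Sum>b<M. \<Sum>j<K. (cmod (?T (j + b * K)))\<^sup>2)"
    by (rule sum_blocks)
  also have "\<dots> \<le> (\<Sum>b<M. \<Sum>j<K. (cmod cc)\<^sup>2 * (cmod (\<Sum>s<M. ee (real b * real s / real M) * ?Z s j))\<^sup>2)"
  proof (intro sum_mono)
    fix b j assume "b \<in> {..<M}" "j \<in> {..<K}"
    then have h: "cmod (?T (j + b * K)) \<le> cmod cc * cmod (\<Sum>s<M. ee (real b * real s / real M) * ?Z s j)"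
      using T2_point by simp
    have "(cmod (?T (j + b * K)))\<^sup>2 \<le> (cmod cc * cmod (\<Sum>s<M. ee (real b * real s / real M) * ?Z s j))\<^sup>2"
      by (rule power_mono[OF h]) simp
    then show "(cmod (?T (j + b * K)))\<^sup>2 \<le> (cmod cc)\<^sup>2 * (cmod (\<Sum>s<M. ee (real b * real s / real M) * ?Z s j))\<^sup>2"
      by (simp only: power_mult_distrib)
  qed
  also have "\<dots> = (cmod cc)\<^sup>2 * (\<Sum>j<K. \<Sum>b<M. (cmod (\<Sum>s<M. ee (real b * real s / real M) * ?Z s j))\<^sup>2)"
    unfolding sum_distrib_left[symmetric] by (subst sum.swap) (rule refl)
  also have "\<dots> = (cmod cc)\<^sup>2 * (\<Sum>j<K. real M * (\<Sum>s<M. (cmod (?Z s j))\<^sup>2))"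
    by (simp only: parseval_ee[OF M])
  also have "\<dots> = (cmod cc)\<^sup>2 * real M * (\<Sum>s<M. \<Sum>j<K. (cmod (?Z s j))\<^sup>2)"
    unfolding sum_distrib_left[symmetric] mult.assoc by (subst sum.swap) (rule refl)
  also have "\<dots> \<le> (cmod cc)\<^sup>2 * real M * (\<Sum>s<M. (real K * L) * (real K * L) * (\<Sum>n'<K. (cmod (V w s n'))\<^sup>2))"
  proof (intro mult_left_mono sum_mono)
    fix s assume "s \<in> {..<M}"
    then have s: "s < M" by simp
    show "(\<Sum>j<K. (cmod (?Z s j))\<^sup>2) \<le> real K * L * (real K * L) * (\<Sum>n'<K. (cmod (V w s n'))\<^sup>2)"
      by (rule schur[OF col_bound[OF s] row_bound[OF s] KL])
  qed simp
  also have "\<dots> \<le> (cmod cc)\<^sup>2 * real M * (\<Sum>s<M. (real K * L) * (real K * L) * (\<Sum>n'<K. (cmod (w (M * n' + s)))\<^sup>2))"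
  proof (intro mult_left_mono sum_mono)
    fix s n' assume "s \<in> {..<M}" "n' \<in> {..<K}"
    then have lt: "real (M * n' + s) < real N" using idx_lt by (simp only: of_nat_less_iff) auto
    then have "real (M * n' + s) / real N \<in> {0..1}" using K M by (auto simp: divide_le_eq_1)
    then have ph: "\<bar>\<phi> (real (M * n' + s) / real N)\<bar> \<le> 1" using phi by auto
    have "cmod (V w s n') \<le> cmod (w (M * n' + s))"
      unfolding V_def norm_mult using ph by (simp add: mult_left_le_one_le)
    then show "(cmod (V w s n'))\<^sup>2 \<le> (cmod (w (M * n' + s)))\<^sup>2" by (intro power_mono) auto
  qed (auto simp: KL)
  also have "(\<Sum>s<M. (real K * L) * (real K * L) * (\<Sum>n'<K. (cmod (w (M * n' + s)))\<^sup>2))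
        = (real K * L) * (real K * L) * (\<Sum>n<N. (cmod (w n))\<^sup>2)"
    by (simp add: sum_distrib_left[symmetric] sum_mod_split)
  also have "(cmod cc)\<^sup>2 * real M * ((real K * L) * (real K * L) * (\<Sum>n<N. (cmod (w n))\<^sup>2))
           = ((cmod cc)\<^sup>2 * (real K * real K * real M)) * L\<^sup>2 * (\<Sum>n<N. (cmod (w n))\<^sup>2)"
    by (simp add: power2_eq_square mult_ac)
  also have "\<dots> = L\<^sup>2 * (\<Sum>n<N. (cmod (w n))\<^sup>2)" by (simp add: cc_sq)
  finally show ?thesis .
qed

lemma op1: "opnorm N (mult_op N \<phi> \<circ> baker M K A chi \<circ> mult_op N \<psi>) \<le> L"
  by (rule opnorm_le[OF L_nn]) (simp add: est1)

lemma op2: "opnorm N (fourier_mult_op N \<psi> \<circ> baker M K A chi \<circ> fourier_mult_op N \<phi>) \<le> L"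
proof (rule opnorm_le[OF L_nn])
  fix u
  have N1: "N \<ge> 1" using K M by simp
  have "(\<Sum>j<N. (cmod ((fourier_mult_op N \<psi> \<circ> baker M K A chi \<circ> fourier_mult_op N \<phi>) u j))\<^sup>2)
      = (\<Sum>j<N. (cmod (mult_op N \<psi> (Dop M K A chi (DFT_adj N (mult_op N \<phi> (DFT N u)))) j))\<^sup>2)"
    by (rule T2_reduce[OF K M])
  also have "\<dots> \<le> L\<^sup>2 * (\<Sum>n<N. (cmod (DFT N u n))\<^sup>2)" by (rule est2)
  also have "\<dots> = L\<^sup>2 * (\<Sum>n<N. (cmod (u n))\<^sup>2)" by (simp add: sumsq_DFT[OF N1])
  finally show "(\<Sum>j<N. (cmod ((fourier_mult_op N \<psi> \<circ> baker M K A chi \<circ> fourier_mult_op N \<phi>) u j))\<^sup>2)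
      \<le> L\<^sup>2 * (\<Sum>n<N. (cmod (u n))\<^sup>2)" .
qed

end


lemma H_min:
  fixes H :: "real \<Rightarrow> real"
  shows "(\<And>x. 0 \<le> H x) \<Longrightarrow> H (min a b) \<le> H a + H b"
proof -
  assume h: "\<And>x. 0 \<le> H x"
  show ?thesis using h[of a] h[of b] by (cases "a \<le> b") (auto simp: min_def)
qed

lemma Hp_nn: "0 \<le> R \<Longrightarrow> 0 \<le> Hp R p x"
  unfolding Hp_def by (cases "R \<le> x") auto

definition cp :: "(real \<Rightarrow> real) \<Rightarrow> nat \<Rightarrow> real" where
  "cp chi p = (1 + real p) * Bd chi p / 2 ^ p"

definition Lp :: "(real \<Rightarrow> real) \<Rightarrow> nat \<Rightarrow> real \<Rightarrow> real" where
  "Lp chi p R = 2 * cp chi p * ((1 + R) / R ^ p)"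

definition L0 :: "(real \<Rightarrow> real) \<Rightarrow> real" where
  "L0 chi = 6 * (Bd chi 0 + Bd chi 2)"

lemma Sk_bound_p:
  assumes ch: "cutoff chi" and K: "K \<ge> 1" and y: "y \<in> {0..1}" and u: "u \<in> {0..1}"
    and t: "0 < real K * circ_dist y u"
  shows "cmod (Sk chi K (y - u)) \<le> real K * (cp chi p / (real K * circ_dist y u) ^ p)"
proof -
  let ?cd = "circ_dist y u"
  let ?t = "real K * ?cd"
  have Kp: "real K > 0" using K by simp
  have cdp: "?cd > 0" using t Kp by (simp add: zero_less_mult_iff)
  have "(2 * ?cd) ^ p \<le> cmod (1 - ee (y - u)) ^ p"
    by (rule power_mono[OF ee_circ[OF y u]]) (use cdp in simp)
  then have "(2 * ?cd) ^ p * cmod (Sk chi K (y - u)) \<le> cmod (1 - ee (y - u)) ^ p * cmod (Sk chi K (y - u))"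
    by (rule mult_right_mono) simp
  also have "\<dots> \<le> real (K + p) * (1 / real K) ^ p * Bd chi p" by (rule S_bound[OF ch K])
  finally have h: "(2 * ?cd) ^ p * cmod (Sk chi K (y - u)) \<le> real (K + p) * (1 / real K) ^ p * Bd chi p" .
  have "(2 * ?t) ^ p * cmod (Sk chi K (y - u)) = real K ^ p * ((2 * ?cd) ^ p * cmod (Sk chi K (y - u)))"
    by (simp add: power_mult_distrib mult_ac)
  also have "\<dots> \<le> real K ^ p * (real (K + p) * (1 / real K) ^ p * Bd chi p)"
    by (rule mult_left_mono[OF h]) simp
  also have "\<dots> = real (K + p) * Bd chi p" using Kp by (simp add: power_one_over)
  also have "\<dots> \<le> real K * (1 + real p) * Bd chi p"
  proof (rule mult_right_mono)
    have "1 * real p \<le> real K * real p" by (rule mult_right_mono) (use K in auto)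
    then show "real (K + p) \<le> real K * (1 + real p)" by (simp add: algebra_simps)
  qed (rule Bd_nonneg[OF ch])
  finally have h2: "(2 * ?t) ^ p * cmod (Sk chi K (y - u)) \<le> real K * (1 + real p) * Bd chi p" .
  have tp: "(2 * ?t) ^ p > 0" using t by simp
  have "cmod (Sk chi K (y - u)) \<le> real K * (1 + real p) * Bd chi p / (2 * ?t) ^ p"
    using h2 tp by (simp add: le_divide_eq mult.commute)
  also have "\<dots> = real K * (cp chi p / ?t ^ p)"
    by (simp add: cp_def power_mult_distrib)
  finally show ?thesis .
qed

lemma Sk_bound_0:
  assumes ch: "cutoff chi" and K: "K \<ge> 1" and y: "y \<in> {0..1}" and u: "u \<in> {0..1}"
    and t: "0 < real K * circ_dist y u"
  shows "cmod (Sk chi K (y - u)) \<le> real K * ((Bd chi 0 + Bd chi 2) * min 1 (1 / (real K * circ_dist y u) ^ 2))"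
proof -
  let ?t = "real K * circ_dist y u"
  have b0: "cmod (Sk chi K (y - u)) \<le> real K * Bd chi 0"
    using Sk_bound_p[OF ch K y u t, of 0] by (simp add: cp_def)
  have b2: "cmod (Sk chi K (y - u)) \<le> real K * (3 / 4 * Bd chi 2 / ?t ^ 2)"
    using Sk_bound_p[OF ch K y u t, of 2] by (simp add: cp_def)
  have B0: "0 \<le> Bd chi 0" and B2: "0 \<le> Bd chi 2" using Bd_nonneg[OF ch] by auto
  show ?thesis
  proof (cases "?t \<le> 1")
    case True
    then have "?t ^ 2 \<le> 1" using t by (simp add: power_le_one)
    moreover have "0 < ?t ^ 2" using t by (rule zero_less_power)
    ultimately have "1 \<le> 1 / ?t ^ 2" by (simp only: le_divide_eq_1_pos)
    then have "min 1 (1 / ?t ^ 2) = 1" by simp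
    moreover have "real K * Bd chi 0 \<le> real K * (Bd chi 0 + Bd chi 2)" using B2 by (intro mult_left_mono) auto
    ultimately show ?thesis using b0 by simp
  next
    case False
    then have "1 \<le> ?t ^ 2" by (simp add: one_le_power)
    then have "1 / ?t ^ 2 \<le> 1" by (rule divide_le_eq_1_pos[THEN iffD2, rotated]) (use t in \<open>rule zero_less_power\<close>)
    then have m: "min 1 (1 / ?t ^ 2) = 1 / ?t ^ 2" by simp
    have "3 / 4 * Bd chi 2 \<le> Bd chi 0 + Bd chi 2" using B0 B2 by linarith
    then have "3 / 4 * Bd chi 2 / ?t ^ 2 \<le> (Bd chi 0 + Bd chi 2) / ?t ^ 2" by (rule divide_right_mono) simp
    then have "3 / 4 * Bd chi 2 / ?t ^ 2 \<le> (Bd chi 0 + Bd chi 2) * (1 / ?t ^ 2)" by simp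
    then show ?thesis unfolding m using b2 K by (meson mult_left_mono of_nat_0_le_iff order_trans)
  qed
qed

lemma cp_nn: "cutoff chi \<Longrightarrow> 0 \<le> cp chi p"
  unfolding cp_def using Bd_nonneg[of chi p] by simp

lemma config_p:
  fixes M K :: nat and A :: "nat set" and \<phi> \<psi> chi :: "real \<Rightarrow> real" and r :: real
  assumes K: "K \<ge> 1" and M: "M \<ge> 1" and A: "A \<subseteq> {0..<M}"
    and phi: "\<forall>x\<in>{0..1}. 0 \<le> \<phi> x \<and> \<phi> x \<le> 1"
    and psi: "\<forall>x\<in>{0..1}. 0 \<le> \<psi> x \<and> \<psi> x \<le> 1"
    and r: "0 < r"
    and hchi: "ereal (real M * r) \<le> 2 * circ_setdist (supp chi) {0}"
    and hsep: "circ_setdist (supp01 \<psi>) (Phi_preimage M A (supp01 \<phi>)) \<ge> ereal r"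
    and ch: "cutoff chi" and p: "p \<ge> 2"
  shows "opnorm (K * M) (mult_op (K * M) \<phi> \<circ> baker M K A chi \<circ> mult_op (K * M) \<psi>) \<le> Lp chi p (real (K * M) * r / 2)
       \<and> opnorm (K * M) (fourier_mult_op (K * M) \<psi> \<circ> baker M K A chi \<circ> fourier_mult_op (K * M) \<phi>) \<le> Lp chi p (real (K * M) * r / 2)"
proof -
  define R where "R = real (K * M) * r / 2"
  have Rp: "R > 0" using K M r by (simp add: R_def)
  interpret opctx M K A \<phi> \<psi> chi r "\<lambda>x. cp chi p / x ^ p" "Lp chi p R"
  proof unfold_locales
    show "\<forall>x. real (K * M) * r / 2 \<le> x \<longrightarrow> 0 \<le> cp chi p / x ^ p"
      using Rp cp_nn[OF ch, of p] unfolding R_def[symmetric] by auto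
    show "\<forall>y u. y \<in> {0..1} \<longrightarrow> u \<in> {0..1} \<longrightarrow> real (K * M) * r / 2 \<le> real K * circ_dist y u \<longrightarrow>
            cmod (Sk chi K (y - u)) \<le> real K * (cp chi p / (real K * circ_dist y u) ^ p)"
    proof (intro allI impI)
      fix y u assume y: "y \<in> {0..1}" and u: "u \<in> {0..1}" and t: "real (K * M) * r / 2 \<le> real K * circ_dist y u"
      have "0 < real K * circ_dist y u" using t Rp unfolding R_def by linarith
      then show "cmod (Sk chi K (y - u)) \<le> real K * (cp chi p / (real K * circ_dist y u) ^ p)"
        by (rule Sk_bound_p[OF ch K y u])
    qed
    show "\<forall>\<theta>. 0 \<le> \<theta> \<longrightarrow> \<theta> < 1 \<longrightarrow>
           (\<Sum>k<K. if real (K * M) * r / 2 \<le> min (real k + \<theta>) (real K - real k - \<theta>)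
                    then cp chi p / min (real k + \<theta>) (real K - real k - \<theta>) ^ p else 0) \<le> Lp chi p R"
    proof (intro allI impI)
      fix \<theta> :: real assume th: "0 \<le> \<theta>" "\<theta> < 1"
      have "(\<Sum>k<K. if real (K * M) * r / 2 \<le> min (real k + \<theta>) (real K - real k - \<theta>)
                    then cp chi p / min (real k + \<theta>) (real K - real k - \<theta>) ^ p else 0)
          = cp chi p * (\<Sum>k<K. Hp R p (min (real k + \<theta>) (real K - real k - \<theta>)))"
        unfolding sum_distrib_left R_def[symmetric] by (intro sum.cong refl) (simp add: Hp_def)
      also have "\<dots> \<le> cp chi p * ((\<Sum>k<K. Hp R p (real k + \<theta>)) + (\<Sum>k<K. Hp R p (real k + (1 - \<theta>))))"
        by (intro mult_left_mono two_sided cp_nn[OF ch] H_min Hp_nn) (use Rp in auto)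
      also have "\<dots> \<le> cp chi p * ((1 + R) / R ^ p + (1 + R) / R ^ p)"
        by (intro mult_left_mono add_mono lattice1 cp_nn[OF ch]) (use Rp p th in auto)
      also have "\<dots> = Lp chi p R" by (simp add: Lp_def)
      finally show "(\<Sum>k<K. if real (K * M) * r / 2 \<le> min (real k + \<theta>) (real K - real k - \<theta>)
                    then cp chi p / min (real k + \<theta>) (real K - real k - \<theta>) ^ p else 0) \<le> Lp chi p R" .
    qed
  qed (use K M A phi psi r hchi hsep ch in auto)
  show ?thesis using op1 op2 by (simp add: R_def)
qed

lemma config_0:
  fixes M K :: nat and A :: "nat set" and \<phi> \<psi> chi :: "real \<Rightarrow> real" and r :: real
  assumes K: "K \<ge> 1" and M: "M \<ge> 1" and A: "A \<subseteq> {0..<M}"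
    and phi: "\<forall>x\<in>{0..1}. 0 \<le> \<phi> x \<and> \<phi> x \<le> 1"
    and psi: "\<forall>x\<in>{0..1}. 0 \<le> \<psi> x \<and> \<psi> x \<le> 1"
    and r: "0 < r"
    and hchi: "ereal (real M * r) \<le> 2 * circ_setdist (supp chi) {0}"
    and hsep: "circ_setdist (supp01 \<psi>) (Phi_preimage M A (supp01 \<phi>)) \<ge> ereal r"
    and ch: "cutoff chi"
  shows "opnorm (K * M) (mult_op (K * M) \<phi> \<circ> baker M K A chi \<circ> mult_op (K * M) \<psi>) \<le> L0 chi
       \<and> opnorm (K * M) (fourier_mult_op (K * M) \<psi> \<circ> baker M K A chi \<circ> fourier_mult_op (K * M) \<phi>) \<le> L0 chi"
proof -
  define R where "R = real (K * M) * r / 2"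
  have Rp: "R > 0" using K M r by (simp add: R_def)
  define B where "B = Bd chi 0 + Bd chi 2"
  have B: "0 \<le> B" using Bd_nonneg[OF ch] by (simp add: B_def add_nonneg_nonneg)
  define H2 where "H2 x = min 1 (1 / x ^ 2)" for x :: real
  have H2nn: "0 \<le> H2 x" for x by (simp add: H2_def)
  interpret opctx M K A \<phi> \<psi> chi r "\<lambda>x. B * H2 x" "L0 chi"
  proof unfold_locales
    show "\<forall>x. real (K * M) * r / 2 \<le> x \<longrightarrow> 0 \<le> B * H2 x"
      using B H2nn by simp
    show "\<forall>y u. y \<in> {0..1} \<longrightarrow> u \<in> {0..1} \<longrightarrow> real (K * M) * r / 2 \<le> real K * circ_dist y u \<longrightarrow>
            cmod (Sk chi K (y - u)) \<le> real K * (B * H2 (real K * circ_dist y u))"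
    proof (intro allI impI)
      fix y u assume y: "y \<in> {0..1}" and u: "u \<in> {0..1}" and t: "real (K * M) * r / 2 \<le> real K * circ_dist y u"
      have "0 < real K * circ_dist y u" using t Rp unfolding R_def by linarith
      then show "cmod (Sk chi K (y - u)) \<le> real K * (B * H2 (real K * circ_dist y u))"
        unfolding B_def H2_def by (rule Sk_bound_0[OF ch K y u])
    qed
    show "\<forall>\<theta>. 0 \<le> \<theta> \<longrightarrow> \<theta> < 1 \<longrightarrow>
           (\<Sum>k<K. if real (K * M) * r / 2 \<le> min (real k + \<theta>) (real K - real k - \<theta>)
                    then B * H2 (min (real k + \<theta>) (real K - real k - \<theta>)) else 0) \<le> L0 chi"
    proof (intro allI impI)
      fix \<theta> :: real assume th: "0 \<le> \<theta>" "\<theta> < 1"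
      have "(\<Sum>k<K. if real (K * M) * r / 2 \<le> min (real k + \<theta>) (real K - real k - \<theta>)
                    then B * H2 (min (real k + \<theta>) (real K - real k - \<theta>)) else 0)
          \<le> (\<Sum>k<K. B * H2 (min (real k + \<theta>) (real K - real k - \<theta>)))"
        by (intro sum_mono) (use B H2nn in auto)
      also have "\<dots> = B * (\<Sum>k<K. H2 (min (real k + \<theta>) (real K - real k - \<theta>)))"
        by (simp add: sum_distrib_left)
      also have "\<dots> \<le> B * ((\<Sum>k<K. H2 (real k + \<theta>)) + (\<Sum>k<K. H2 (real k + (1 - \<theta>))))"
        by (intro mult_left_mono two_sided B H_min H2nn)
      also have "\<dots> \<le> B * (3 + 3)"
        by (intro mult_left_mono add_mono B) (use th in \<open>simp_all add: H2_def lattice2\<close>)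
      also have "\<dots> = L0 chi" by (simp add: L0_def B_def)
      finally show "(\<Sum>k<K. if real (K * M) * r / 2 \<le> min (real k + \<theta>) (real K - real k - \<theta>)
                    then B * H2 (min (real k + \<theta>) (real K - real k - \<theta>)) else 0) \<le> L0 chi" .
    qed
  qed (use K M A phi psi r hchi hsep ch in auto)
  show ?thesis using op1 op2 by simp
qed


definition gfun :: "(real \<Rightarrow> real) \<Rightarrow> real \<Rightarrow> real" where
  "gfun chi x = min (L0 chi) (Inf ((\<lambda>p. Lp chi p (x / 2)) ` {2..}))"

lemma Lp_nn: "cutoff chi \<Longrightarrow> R > 0 \<Longrightarrow> 0 \<le> Lp chi p R"
  unfolding Lp_def using cp_nn[of chi p] by simp

lemma L0_nn: "cutoff chi \<Longrightarrow> 0 \<le> L0 chi"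
  unfolding L0_def using Bd_nonneg[of chi 0] Bd_nonneg[of chi 2] by simp

lemma gfun_props:
  assumes ch: "cutoff chi" and x: "x > 0"
  shows "0 \<le> gfun chi x" "gfun chi x \<le> L0 chi" "\<And>p. p \<ge> 2 \<Longrightarrow> gfun chi x \<le> Lp chi p (x / 2)"
    and "\<And>v. v \<le> L0 chi \<Longrightarrow> (\<And>p. p \<ge> 2 \<Longrightarrow> v \<le> Lp chi p (x / 2)) \<Longrightarrow> v \<le> gfun chi x"
proof -
  let ?S = "(\<lambda>p. Lp chi p (x / 2)) ` {2..}"
  have ne: "?S \<noteq> {}" by auto
  have nn: "\<And>y. y \<in> ?S \<Longrightarrow> 0 \<le> y" using Lp_nn[OF ch] x by auto
  have bdd: "bdd_below ?S" using nn by (intro bdd_belowI[of _ 0]) auto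
  show "0 \<le> gfun chi x" unfolding gfun_def using L0_nn[OF ch] cInf_greatest[OF ne nn] by simp
  show "gfun chi x \<le> L0 chi" unfolding gfun_def by simp
  show "gfun chi x \<le> Lp chi p (x / 2)" if "p \<ge> 2" for p
  proof -
    have "Inf ?S \<le> Lp chi p (x / 2)" by (rule cInf_lower[OF _ bdd]) (use that in auto)
    then show ?thesis unfolding gfun_def by simp
  qed
  show "v \<le> gfun chi x" if "v \<le> L0 chi" "\<And>p. p \<ge> 2 \<Longrightarrow> v \<le> Lp chi p (x / 2)" for v
  proof -
    have "v \<le> Inf ?S" by (rule cInf_greatest[OF ne]) (use that in auto)
    then show ?thesis unfolding gfun_def using that(1) by simp
  qed
qed

lemma gfun_poly:
  assumes ch: "cutoff chi"
  shows "\<exists>C>0. \<forall>x>0. gfun chi x \<le> C * x powr (- real n)"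
proof -
  define c where "c = cp chi (n + 2)"
  have c: "0 \<le> c" using cp_nn[OF ch] by (simp add: c_def)
  define C where "C = 2 ^ n * (4 * c + L0 chi) + 1"
  have "0 \<le> (2::real) ^ n * (4 * c + L0 chi)" using c L0_nn[OF ch] by (intro mult_nonneg_nonneg) auto
  then have Cp: "C > 0" by (simp add: C_def)
  show ?thesis
  proof (intro exI[of _ C] conjI allI impI Cp)
    fix x :: real assume x: "x > 0"
    define R where "R = x / 2"
    have Rp: "R > 0" using x by (simp add: R_def)
    have xp: "x powr (- real n) = 1 / x ^ n" using x by (simp add: powr_minus powr_realpow divide_inverse)
    have e2: "1 / R ^ n = 2 ^ n * (1 / x ^ n)" by (simp add: R_def power_divide)
    have ix: "0 \<le> 1 / x ^ n" using x by simp
    show "gfun chi x \<le> C * x powr (- real n)"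
    proof (cases "R \<ge> 1")
      case True
      have "gfun chi x \<le> Lp chi (n + 2) R" using gfun_props(3)[OF ch x, of "n + 2"] by (simp add: R_def)
      also have "\<dots> = 2 * c * ((1 + R) / R ^ (n + 2))" by (simp add: Lp_def c_def)
      also have "(1 + R) / R ^ (n + 2) \<le> 2 / R ^ n"
      proof -
        have "(1 + R) / R ^ (n + 2) \<le> (2 * R) / R ^ (n + 2)" using True by (intro divide_right_mono) auto
        also have "\<dots> = 2 / (R * R ^ n)" using Rp by (simp add: power_add power2_eq_square)
        also have "\<dots> \<le> 2 / (1 * R ^ n)" using True Rp by (intro divide_left_mono mult_right_mono) auto
        finally show ?thesis by simp
      qed
      then have "2 * c * ((1 + R) / R ^ (n + 2)) \<le> 2 * c * (2 / R ^ n)" using c by (intro mult_left_mono) auto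
      also have "\<dots> = 2 ^ n * (4 * c) * (1 / x ^ n)" using e2 by (simp add: divide_inverse mult_ac)
      also have "\<dots> \<le> C * (1 / x ^ n)" using ix L0_nn[OF ch] c by (intro mult_right_mono) (auto simp: C_def algebra_simps)
      finally show ?thesis unfolding xp .
    next
      case False
      then have "x < 2" by (simp add: R_def)
      then have "x ^ n \<le> 2 ^ n" using x by (intro power_mono) auto
      then have one: "1 \<le> 2 ^ n * (1 / x ^ n)" using x by (simp add: field_simps)
      have "gfun chi x \<le> L0 chi" by (rule gfun_props(2)[OF ch x])
      also have "\<dots> = L0 chi * 1" by simp
      also have "\<dots> \<le> L0 chi * (2 ^ n * (1 / x ^ n))" by (rule mult_left_mono[OF one L0_nn[OF ch]])
      also have "\<dots> = (2 ^ n * L0 chi) * (1 / x ^ n)" by (simp add: mult_ac)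
      also have "\<dots> \<le> C * (1 / x ^ n)"
      proof (rule mult_right_mono[OF _ ix])
        have "0 \<le> (2::real) ^ n * (4 * c)" using c by simp
        then show "2 ^ n * L0 chi \<le> C" unfolding C_def by (simp add: distrib_left)
      qed
      finally show ?thesis unfolding xp .
    qed
  qed
qed

lemma Bd_gevrey:
  assumes ch: "cutoff chi" and g: "gevrey_c s chi"
  shows "\<exists>C1\<ge>1. \<forall>p. Bd chi p \<le> C1 ^ (p + 1) * fact p powr s"
proof -
  obtain C0 where C0: "\<forall>\<alpha>::nat. \<forall>x\<in>{0..1::real}. \<bar>(deriv ^^ \<alpha>) chi x\<bar> \<le> C0 ^ (\<alpha> + 1) * fact \<alpha> powr s"
    using g unfolding gevrey_c_def by (meson compact_Icc)
  define C1 where "C1 = max \<bar>C0\<bar> 1"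
  have C1: "C1 \<ge> 1" by (simp add: C1_def)
  have "Bd chi p \<le> C1 ^ (p + 1) * fact p powr s" for p
    unfolding Bd_def
  proof (rule cSup_least)
    show "(\<lambda>x. \<bar>(deriv ^^ p) chi x\<bar>) ` {0..1} \<noteq> {}" by simp
  next
    fix z assume "z \<in> (\<lambda>x. \<bar>(deriv ^^ p) chi x\<bar>) ` {0..1}"
    then obtain x where x: "x \<in> {0..1}" "z = \<bar>(deriv ^^ p) chi x\<bar>" by auto
    have "z \<le> C0 ^ (p + 1) * fact p powr s" using C0 x by auto
    also have "\<dots> \<le> C1 ^ (p + 1) * fact p powr s"
    proof (rule mult_right_mono)
      have "C0 ^ (p + 1) \<le> \<bar>C0\<bar> ^ (p + 1)" by (metis abs_ge_self power_abs)
      also have "\<dots> \<le> C1 ^ (p + 1)" by (intro power_mono) (auto simp: C1_def)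
      finally show "C0 ^ (p + 1) \<le> C1 ^ (p + 1)" .
    qed simp
    finally show "z \<le> C1 ^ (p + 1) * fact p powr s" .
  qed
  then show ?thesis using C1 by blast
qed

lemma suc_le_pow2: "Suc q \<le> 2 ^ q"
  by (induction q) auto

lemma plus3_le_pow3: "q + 3 \<le> (3::nat) ^ (q + 1)"
  by (induction q) auto

lemma powr_pow_swap: "a > 0 \<Longrightarrow> (a ^ q) powr s = (a powr s) ^ q"
  for a s :: real
  by (simp add: powr_realpow[symmetric] powr_powr powr_power mult.commute)

lemma gev_L:
  assumes ch: "cutoff chi" and C1: "C1 \<ge> 1" and s: "s \<ge> 0"
    and B: "\<forall>p. Bd chi p \<le> C1 ^ (p + 1) * fact p powr s"
    and q: "q \<ge> 1" and R: "R \<ge> 1"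
  shows "Lp chi (q + 1) R \<le> 2 * C1\<^sup>2 * (3 * C1 * 2 powr s / 2 * real q powr s / R) ^ q"
proof -
  have qp: "real q > 0" using q by simp
  have Rp: "R > 0" using R by simp
  have f1: "fact (q + 1) \<le> (2::real) ^ q * real q ^ q"
  proof -
    have "fact (q + 1) = real (Suc q) * fact q" by simp
    also have "\<dots> \<le> 2 ^ q * real (q ^ q)"
    proof (rule mult_mono)
      show "real (Suc q) \<le> 2 ^ q" using suc_le_pow2[of q] by (metis of_nat_le_iff of_nat_numeral of_nat_power)
      show "fact q \<le> real (q ^ q)" by (rule fact_le_power)
    qed auto
    finally show ?thesis by simp
  qed
  have f2: "fact (q + 1) powr s \<le> (2 powr s) ^ q * (real q powr s) ^ q"
  proof -
    have "fact (q + 1) powr s \<le> ((2::real) ^ q * real q ^ q) powr s"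
      by (rule powr_mono2[OF s _ f1]) simp
    also have "\<dots> = (2 ^ q) powr s * (real q ^ q) powr s" by (rule powr_mult)
    also have "\<dots> = (2 powr s) ^ q * (real q powr s) ^ q" using qp by (simp add: powr_pow_swap)
    finally show ?thesis .
  qed
  have f3: "1 + real (q + 1) \<le> 3 ^ q"
  proof -
    obtain q' where q': "q = q' + 1" using q by (metis add.commute le_Suc_ex)
    have "q' + 3 \<le> (3::nat) ^ (q' + 1)" by (rule plus3_le_pow3)
    then have "real (q' + 3) \<le> 3 ^ (q' + 1)" by (metis of_nat_le_iff of_nat_numeral of_nat_power)
    then show ?thesis by (simp add: q')
  qed
  have f4: "(1 + R) / R ^ (q + 1) \<le> 2 / R ^ q"
  proof -
    have "(1 + R) / R ^ (q + 1) \<le> (2 * R) / R ^ (q + 1)" using R by (intro divide_right_mono) auto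
    also have "\<dots> = 2 / R ^ q" using Rp by simp
    finally show ?thesis .
  qed
  have Bq: "Bd chi (q + 1) \<le> C1 ^ (q + 2) * ((2 powr s) ^ q * (real q powr s) ^ q)"
  proof -
    have "Bd chi (q + 1) \<le> C1 ^ (q + 2) * fact (q + 1) powr s" using B[rule_format, of "q + 1"] by simp
    also have "\<dots> \<le> C1 ^ (q + 2) * ((2 powr s) ^ q * (real q powr s) ^ q)"
      by (rule mult_left_mono[OF f2]) (use C1 in simp)
    finally show ?thesis .
  qed
  have "Lp chi (q + 1) R = 2 * ((1 + real (q + 1)) * Bd chi (q + 1) / 2 ^ (q + 1)) * ((1 + R) / R ^ (q + 1))"
    by (simp add: Lp_def cp_def)
  also have "\<dots> \<le> 2 * (3 ^ q * (C1 ^ (q + 2) * ((2 powr s) ^ q * (real q powr s) ^ q)) / 2 ^ (q + 1)) * (2 / R ^ q)"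
  proof (intro mult_mono mult_left_mono divide_right_mono f3 Bq f4)
    show "0 \<le> Bd chi (q + 1)" by (rule Bd_nonneg[OF ch])
    show "0 \<le> (1 + real (q + 1)) * Bd chi (q + 1) / 2 ^ (q + 1)"
      using Bd_nonneg[OF ch, of "q + 1"] by simp
  qed (use Rp C1 in auto)
  also have "\<dots> = 2 * C1\<^sup>2 * (3 * C1 * 2 powr s / 2 * real q powr s / R) ^ q"
    using Rp by (simp add: power_mult_distrib power_divide power_add field_simps power2_eq_square)
  finally show ?thesis .
qed

lemma gfun_gevrey:
  assumes ch: "cutoff chi" and s1: "s > 1" and g: "gevrey_c s chi"
  shows "\<exists>C>0. \<exists>c>0. \<forall>x>0. gfun chi x \<le> C * exp (- c * x powr (1 / s))"
proof -
  obtain C1 where C1: "C1 \<ge> 1" and B: "\<forall>p. Bd chi p \<le> C1 ^ (p + 1) * fact p powr s"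
    using Bd_gevrey[OF ch g] by blast
  have s0: "s > 0" "s \<ge> 0" using s1 by auto
  define D where "D = 3 * C1 * 2 powr s / 2"
  have two_s: "1 \<le> (2::real) powr s" using s0 by (simp add: ge_one_powr_ge_zero)
  have D: "D \<ge> 3 / 2"
  proof -
    have "3 * 1 * 1 \<le> 3 * C1 * 2 powr s" using C1 two_s by (intro mult_mono) auto
    then show ?thesis by (simp add: D_def)
  qed
  define c where "c = ln 2 * (4 * D) powr (- 1 / s)"
  have cp: "c > 0" using D by (simp add: c_def)
  define C where "C = 4 * C1\<^sup>2 + 2 * L0 chi + 1"
  have "0 \<le> 4 * C1\<^sup>2" by simp
  then have Cp: "C > 0" using L0_nn[OF ch] unfolding C_def by linarith
  show ?thesis
  proof (rule exI[of _ C], rule conjI[OF Cp], rule exI[of _ c], rule conjI[OF cp], intro allI impI)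
    fix x :: real assume x: "x > 0"
    define R where "R = x / 2"
    have Rp: "R > 0" using x by (simp add: R_def)
    define y where "y = (R / (2 * D)) powr (1 / s)"
    have y0: "y \<ge> 0" by (simp add: y_def)
    have cy: "c * x powr (1 / s) = ln 2 * y"
    proof -
      have "R / (2 * D) = x / (4 * D)" by (simp add: R_def)
      then have "y = x powr (1 / s) / (4 * D) powr (1 / s)" using D x by (simp add: y_def powr_divide)
      also have "\<dots> = x powr (1 / s) * (4 * D) powr (- 1 / s)"
        by (simp add: powr_minus divide_inverse)
      finally show ?thesis by (simp add: c_def mult_ac)
    qed
    define q where "q = nat \<lfloor>y\<rfloor>"
    have qy: "real q \<le> y" "y < real q + 1" using y0 by (auto simp: q_def)
    have E: "exp (- c * x powr (1 / s)) = exp (- (ln 2 * y))" using cy by simp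
    show "gfun chi x \<le> C * exp (- c * x powr (1 / s))"
    proof (cases "q \<ge> 1")
      case False
      then have "y < 1" using qy by simp
      then have "- (ln 2 * y) > - ln 2" using ln_gt_zero[of 2] by simp
      then have "exp (- (ln 2 * y)) > exp (- ln 2)" by simp
      then have half: "exp (- (ln 2 * y)) > 1 / 2" by (simp add: exp_minus)
      have "gfun chi x \<le> L0 chi" by (rule gfun_props(2)[OF ch x])
      also have "\<dots> \<le> 2 * L0 chi * exp (- (ln 2 * y))"
      proof -
        have "L0 chi * 1 \<le> L0 chi * (2 * exp (- (ln 2 * y)))" using half L0_nn[OF ch] by (intro mult_left_mono) auto
        then show ?thesis by (simp add: mult_ac)
      qed
      also have "\<dots> \<le> C * exp (- (ln 2 * y))" by (intro mult_right_mono) (auto simp: C_def)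
      finally have "gfun chi x \<le> C * exp (- (ln 2 * y))" .
      then show ?thesis by (simp only: E)
    next
      case True
      have y1: "1 \<le> y" using True qy by simp
      have RD: "R / (2 * D) \<ge> 1"
      proof (rule ccontr)
        assume "\<not> R / (2 * D) \<ge> 1"
        then have "R / (2 * D) < 1" by simp
        then have "(R / (2 * D)) powr (1 / s) < 1 powr (1 / s)"
          using Rp D s0 by (intro powr_less_mono2) auto
        then show False using y1 by (simp add: y_def)
      qed
      then have R1: "R \<ge> 1" using D by (simp add: field_simps)
      have "real q powr s \<le> y powr s" by (rule powr_mono2[OF s0(2)]) (use qy in auto)
      also have "y powr s = R / (2 * D)" using Rp D s0 by (simp add: y_def powr_powr)
      finally have qs: "real q powr s \<le> R / (2 * D)" .
      have ratio: "3 * C1 * 2 powr s / 2 * real q powr s / R \<le> 1 / 2"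
      proof -
        have "3 * C1 * 2 powr s / 2 * real q powr s = D * real q powr s" by (simp add: D_def)
        also have "\<dots> \<le> D * (R / (2 * D))" using qs D by (intro mult_left_mono) auto
        also have "\<dots> = R / 2" using D by simp
        finally show ?thesis using Rp by (simp add: divide_le_eq)
      qed
      have half2: "(1 / 2 :: real) ^ q \<le> 2 * exp (- (ln 2 * y))"
      proof -
        have "(1 / 2 :: real) ^ q = exp (- (real q * ln 2))"
          by (simp add: exp_minus exp_of_nat_mult power_one_over inverse_eq_divide)
        also have "\<dots> \<le> exp (ln 2 - ln 2 * y)"
        proof -
          have "ln 2 * y \<le> ln 2 * (real q + 1)" by (rule mult_left_mono) (use qy in auto)
          then have "- (real q * ln 2) \<le> ln 2 - ln 2 * y" by (simp add: algebra_simps)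
          then show ?thesis by simp
        qed
        also have "\<dots> = 2 * exp (- (ln 2 * y))" by (simp add: exp_diff exp_minus divide_inverse)
        finally show ?thesis .
      qed
      have "gfun chi x \<le> Lp chi (q + 1) R"
        using gfun_props(3)[OF ch x, of "q + 1"] True by (simp add: R_def)
      also have "\<dots> \<le> 2 * C1\<^sup>2 * (3 * C1 * 2 powr s / 2 * real q powr s / R) ^ q"
        by (rule gev_L[OF ch C1 s0(2) B True R1])
      also have "\<dots> \<le> 2 * C1\<^sup>2 * (1 / 2) ^ q"
        by (intro mult_left_mono power_mono ratio) (use Rp C1 in auto)
      also have "2 * C1\<^sup>2 * (1 / 2) ^ q \<le> 2 * C1\<^sup>2 * (2 * exp (- (ln 2 * y)))" using half2 by (intro mult_left_mono) auto
      also have "\<dots> = 4 * C1\<^sup>2 * exp (- (ln 2 * y))" by simp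
      also have "\<dots> \<le> C * exp (- (ln 2 * y))" using L0_nn[OF ch] by (intro mult_right_mono) (auto simp: C_def)
      finally have "gfun chi x \<le> C * exp (- (ln 2 * y))" .
      then show ?thesis by (simp only: E)
    qed
  qed
qed


theorem proposition1:
  fixes chi :: "real \<Rightarrow> real"
  assumes "cutoff chi"
  shows "\<exists>g :: real \<Rightarrow> real.
     (\<forall>x>0. 0 \<le> g x) \<and>
     (\<forall>n::nat. \<exists>C>0. \<forall>x>0. g x \<le> C * x powr (- real n)) \<and>
     (\<forall>s>1. gevrey_c s chi \<longrightarrow> (\<exists>C>0. \<exists>c>0. \<forall>x>0. g x \<le> C * exp (- c * x powr (1 / s)))) \<and>
     (\<forall>(M::nat) (K::nat) (A::nat set) (\<phi>::real \<Rightarrow> real) (\<psi>::real \<Rightarrow> real) (r::real).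
        M \<ge> 1 \<longrightarrow> K \<ge> 1 \<longrightarrow> A \<subseteq> {0..<M} \<longrightarrow>
        (\<forall>x\<in>{0..1}. 0 \<le> \<phi> x \<and> \<phi> x \<le> 1) \<longrightarrow>
        (\<forall>x\<in>{0..1}. 0 \<le> \<psi> x \<and> \<psi> x \<le> 1) \<longrightarrow>
        0 < r \<longrightarrow> ereal (real M * r) \<le> 2 * circ_setdist (supp chi) {0} \<longrightarrow>
        circ_setdist (supp01 \<psi>) (Phi_preimage M A (supp01 \<phi>)) \<ge> ereal r \<longrightarrow>
        opnorm (K * M) (mult_op (K * M) \<phi> \<circ> baker M K A chi \<circ> mult_op (K * M) \<psi>)
          \<le> g (real (K * M) * r) \<and>
        opnorm (K * M) (fourier_mult_op (K * M) \<psi> \<circ> baker M K A chi \<circ> fourier_mult_op (K * M) \<phi>)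
          \<le> g (real (K * M) * r))"
proof -
  have ch: "cutoff chi" by (rule assms)
  show ?thesis
  proof (rule exI[of _ "gfun chi"], intro conjI)
    show "\<forall>x>0. 0 \<le> gfun chi x" using gfun_props(1)[OF ch] by blast
    show "\<forall>n::nat. \<exists>C>0. \<forall>x>0. gfun chi x \<le> C * x powr (- real n)" using gfun_poly[OF ch] by blast
    show "\<forall>s>1. gevrey_c s chi \<longrightarrow> (\<exists>C>0. \<exists>c>0. \<forall>x>0. gfun chi x \<le> C * exp (- c * x powr (1 / s)))"
      using gfun_gevrey[OF ch] by blast
    show "\<forall>(M::nat) (K::nat) (A::nat set) (\<phi>::real \<Rightarrow> real) (\<psi>::real \<Rightarrow> real) (r::real).
        M \<ge> 1 \<longrightarrow> K \<ge> 1 \<longrightarrow> A \<subseteq> {0..<M} \<longrightarrow>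
        (\<forall>x\<in>{0..1}. 0 \<le> \<phi> x \<and> \<phi> x \<le> 1) \<longrightarrow>
        (\<forall>x\<in>{0..1}. 0 \<le> \<psi> x \<and> \<psi> x \<le> 1) \<longrightarrow>
        0 < r \<longrightarrow> ereal (real M * r) \<le> 2 * circ_setdist (supp chi) {0} \<longrightarrow>
        circ_setdist (supp01 \<psi>) (Phi_preimage M A (supp01 \<phi>)) \<ge> ereal r \<longrightarrow>
        opnorm (K * M) (mult_op (K * M) \<phi> \<circ> baker M K A chi \<circ> mult_op (K * M) \<psi>)
          \<le> gfun chi (real (K * M) * r) \<and>
        opnorm (K * M) (fourier_mult_op (K * M) \<psi> \<circ> baker M K A chi \<circ> fourier_mult_op (K * M) \<phi>)
          \<le> gfun chi (real (K * M) * r)"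
    proof (intro allI impI)
      fix M K :: nat and A :: "nat set" and \<phi> \<psi> :: "real \<Rightarrow> real" and r :: real
      assume M: "M \<ge> 1" and K: "K \<ge> 1" and A: "A \<subseteq> {0..<M}"
        and phi: "\<forall>x\<in>{0..1}. 0 \<le> \<phi> x \<and> \<phi> x \<le> 1"
        and psi: "\<forall>x\<in>{0..1}. 0 \<le> \<psi> x \<and> \<psi> x \<le> 1"
        and r: "0 < r" and hchi: "ereal (real M * r) \<le> 2 * circ_setdist (supp chi) {0}"
        and hsep: "circ_setdist (supp01 \<psi>) (Phi_preimage M A (supp01 \<phi>)) \<ge> ereal r"
      have x: "real (K * M) * r > 0" using K M r by simp
      note c0 = config_0[OF K M A phi psi r hchi hsep ch]
      note cp = config_p[OF K M A phi psi r hchi hsep ch]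
      show "opnorm (K * M) (mult_op (K * M) \<phi> \<circ> baker M K A chi \<circ> mult_op (K * M) \<psi>)
          \<le> gfun chi (real (K * M) * r) \<and>
        opnorm (K * M) (fourier_mult_op (K * M) \<psi> \<circ> baker M K A chi \<circ> fourier_mult_op (K * M) \<phi>)
          \<le> gfun chi (real (K * M) * r)"
      proof (intro conjI)
        show "opnorm (K * M) (mult_op (K * M) \<phi> \<circ> baker M K A chi \<circ> mult_op (K * M) \<psi>)
          \<le> gfun chi (real (K * M) * r)"
          by (rule gfun_props(4)[OF ch x]) (use c0 cp in auto)
        show "opnorm (K * M) (fourier_mult_op (K * M) \<psi> \<circ> baker M K A chi \<circ> fourier_mult_op (K * M) \<phi>)
          \<le> gfun chi (real (K * M) * r)"
          by (rule gfun_props(4)[OF ch x]) (use c0 cp in auto)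
      qed
    qed
  qed
qed


end
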